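(* Fix $1\le p\le4$. The function $\beta:\mathbb{R}\to[0,\infty)$ is continuous, i.e. $\lim_{t\to t_0}\beta(t)=\beta(t_0)$ for every $t_0\in\mathbb{R}$.
   Context: Functions in $W^{2,p}(0,1)$ are identified with their $C^1$ representatives; $w(0_+)$, $w(1_-)$, $w'(0_+)$ denote one-sided endpoint limits. For $w\in W^{2,p}(0,1)$, $\Phi(w):=\left(\int_0^1(w^2-1)^2dy\right)^{3/4}\left(\int_0^1|w''|^2dy\right)^{1/4}$. For $t\in\mathbb{R}$, $\mathscr{J}'(t):=\{w\in W^{2,p}(0,1): w(0_+)=-1,\ w(1_-)=t,\ w'(0_+)=0\}$ and $\beta(t):=\frac{4}{3^{3/4}}\inf_{w\in\mathscr{J}'(t)}\Phi(w)$. *)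

theory Defs
  imports "HOL-Analysis.Analysis"
begin

abbreviation I01 :: "real measure" where
  "I01 \<equiv> lebesgue_on {0<..<1}"

definition Lp :: "real \<Rightarrow> (real \<Rightarrow> real) \<Rightarrow> bool" where
  "Lp p f \<longleftrightarrow> f \<in> borel_measurable I01 \<and> integrable I01 (\<lambda>x. \<bar>f x\<bar> powr p)"

definition test_fun :: "(real \<Rightarrow> real) \<Rightarrow> bool" where
  "test_fun \<phi> \<longleftrightarrow> (\<forall>n x. ((deriv ^^ n) \<phi>) differentiable (at x))
     \<and> (\<exists>a b. 0 < a \<and> a \<le> b \<and> b < 1 \<and> (\<forall>x. x \<notin> {a..b} \<longrightarrow> \<phi> x = 0))"

definition weak_deriv :: "(real \<Rightarrow> real) \<Rightarrow> (real \<Rightarrow> real) \<Rightarrow> bool" where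
  "weak_deriv f g \<longleftrightarrow> (\<forall>\<phi>. test_fun \<phi> \<longrightarrow>
      (LINT x|I01. f x * deriv \<phi> x) = - (LINT x|I01. g x * \<phi> x))"

text \<open>w is the C^1 representative of an element of W^{2,p}(0,1):
  w is C^1 on (0,1), w and w' lie in L^p, and w' has a weak derivative in L^p.\<close>
definition W2p :: "real \<Rightarrow> (real \<Rightarrow> real) \<Rightarrow> bool" where
  "W2p p w \<longleftrightarrow> (\<forall>x\<in>{0<..<1}. w differentiable (at x))
     \<and> continuous_on {0<..<1} (deriv w)
     \<and> Lp p w \<and> Lp p (deriv w)
     \<and> (\<exists>g. Lp p g \<and> weak_deriv (deriv w) g)"

text \<open>The (a.e. unique) weak second derivative w''.\<close>
definition d2 :: "real \<Rightarrow> (real \<Rightarrow> real) \<Rightarrow> real \<Rightarrow> real" where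
  "d2 p w = (SOME g. Lp p g \<and> weak_deriv (deriv w) g)"

definition epow :: "ennreal \<Rightarrow> real \<Rightarrow> ennreal" where
  "epow x a = (if x = \<infinity> then \<infinity> else ennreal (enn2real x powr a))"

definition Phi :: "real \<Rightarrow> (real \<Rightarrow> real) \<Rightarrow> ennreal" where
  "Phi p w = epow (\<integral>\<^sup>+ y. ennreal (((w y)\<^sup>2 - 1)\<^sup>2) \<partial>I01) (3/4)
           * epow (\<integral>\<^sup>+ y. ennreal ((d2 p w y)\<^sup>2) \<partial>I01) (1/4)"

definition Jprime :: "real \<Rightarrow> real \<Rightarrow> (real \<Rightarrow> real) set" where
  "Jprime p t = {w. W2p p w \<and> (w \<longlongrightarrow> -1) (at_right 0) \<and> (w \<longlongrightarrow> t) (at_left 1)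
                  \<and> (deriv w \<longlongrightarrow> 0) (at_right 0)}"

definition beta :: "real \<Rightarrow> real \<Rightarrow> ennreal" where
  "beta p t = ennreal (4 / 3 powr (3/4)) * (INF w\<in>Jprime p t. Phi p w)"

end

theory Submission
  imports Defs "HOL-Computational_Algebra.Polynomial"
begin

definition hP :: "real poly \<Rightarrow> real \<Rightarrow> real" where
  "hP P x = (if 0 < x then poly P (inverse x) * exp (- inverse x) else 0)"

definition dQ :: "real poly \<Rightarrow> real poly" where
  "dQ P = [:0,0,1:] * (P - pderiv P)"

lemma lim_poly_exp: "((\<lambda>u. poly (P::real poly) u * exp (- u)) \<longlongrightarrow> 0) at_top"
proof -
  have "((\<lambda>u. \<Sum>i\<le>degree P. coeff P i * (u ^ i / exp u)) \<longlongrightarrow> (\<Sum>i\<le>degree P. coeff P i * 0)) at_top"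
    by (intro tendsto_sum tendsto_mult tendsto_const tendsto_power_div_exp_0)
  moreover have "(\<lambda>u. \<Sum>i\<le>degree P. coeff P i * (u ^ i / exp u)) = (\<lambda>u. poly P u * exp (- u))"
    by (simp add: poly_altdef sum_distrib_right exp_minus divide_inverse mult.assoc)
  ultimately show ?thesis by simp
qed

lemma lim_hP0: "((\<lambda>x. poly P (inverse x) * exp (- inverse x)) \<longlongrightarrow> 0) (at_right (0::real))"
  using filterlim_compose[OF lim_poly_exp filterlim_inverse_at_top_right] by (simp add: o_def)

lemma hP_deriv: "(hP P has_real_derivative hP (dQ P) x) (at x)"
proof (cases "0 < x")
  case True
  let ?u = "inverse x"
  have d: "((\<lambda>x. poly P (inverse x) * exp (- inverse x)) has_real_derivative
     poly (pderiv P) ?u * (- (inverse x ^ 2)) * exp (- ?u) + poly P ?u * (exp (- ?u) * (inverse x ^ 2))) (at x)"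
    using True
    by (auto intro!: derivative_eq_intros DERIV_chain2[OF poly_DERIV] simp: power2_eq_square)
  have e: "poly (pderiv P) ?u * (- (inverse x ^ 2)) * exp (- ?u) + poly P ?u * (exp (- ?u) * (inverse x ^ 2))
     = hP (dQ P) x"
    using True by (simp add: hP_def dQ_def algebra_simps power2_eq_square)
  show ?thesis
    apply (rule has_field_derivative_transform_within_open[where S="{0<..}"])
    using d e True by (auto simp: hP_def)
next
  case False
  show ?thesis
  proof (cases "x < 0")
    case True
    have "((\<lambda>_. 0) has_real_derivative hP (dQ P) x) (at x)" using True by (simp add: hP_def)
    then show ?thesis
      apply (rule has_field_derivative_transform_within_open[where S="{..<0}"])
      using True by (auto simp: hP_def)
  next
    case False
    with \<open>\<not> 0 < x\<close> have x: "x = 0" by simp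
    have r: "((\<lambda>h. (hP P (0 + h) - hP P 0) / h) \<longlongrightarrow> 0) (at_right 0)"
    proof -
      have "((\<lambda>h. poly (pCons 0 P) (inverse h) * exp (- inverse h)) \<longlongrightarrow> 0) (at_right (0::real))"
        by (rule lim_hP0)
      then show ?thesis
        apply (rule Lim_transform_eventually)
        using eventually_at_right_less[of "0::real"]
        by eventually_elim (auto simp: hP_def divide_inverse mult.commute mult.left_commute)
    qed
    have l: "((\<lambda>h. (hP P (0 + h) - hP P 0) / h) \<longlongrightarrow> 0) (at_left 0)"
      apply (rule Lim_transform_eventually[OF tendsto_const[of 0]])
      using eventually_at_left_field[of "\<lambda>h. h < 0" "0::real"]
      by (auto simp: hP_def eventually_at_left_field intro: exI[of _ "-1"])
    have "hP (dQ P) 0 = 0" by (simp add: hP_def)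
    then show ?thesis using filterlim_split_at[OF l r] x by (simp add: DERIV_def)
  qed
qed

lemma hP_nonneg: "0 \<le> hP 1 x" by (simp add: hP_def)
lemma hP_pos: "0 < x \<Longrightarrow> 0 < hP 1 x" by (simp add: hP_def)
lemma hP_zero: "x \<le> 0 \<Longrightarrow> hP P x = 0" by (simp add: hP_def)

fun smn :: "nat \<Rightarrow> (real \<Rightarrow> real) \<Rightarrow> bool" where
  "smn 0 f = (\<forall>x. f differentiable (at x))"
| "smn (Suc n) f = ((\<forall>x. f differentiable (at x)) \<and> smn n (deriv f))"

definition smooth :: "(real \<Rightarrow> real) \<Rightarrow> bool" where
  "smooth f = (\<forall>n. smn n f)"

lemma smn_diff: "smn n f \<Longrightarrow> f differentiable (at x)"
  by (cases n) auto

lemma smn_mono: "smn (Suc n) f \<Longrightarrow> smn n f"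
  by (induction n arbitrary: f) auto

lemma smooth_funpow: "smooth f \<Longrightarrow> ((deriv ^^ n) f) differentiable (at x)"
proof (induction n arbitrary: f)
  case 0
  then show ?case using smn_diff[of 0 f] by (simp add: smooth_def)
next
  case (Suc n)
  have "smooth (deriv f)" using Suc.prems by (auto simp: smooth_def dest: spec[of _ "Suc _"])
  then show ?case using Suc.IH by (simp add: funpow_Suc_right del: funpow.simps)
qed

lemma deriv_ext: "(\<And>x. (f has_real_derivative f' x) (at x)) \<Longrightarrow> deriv f = f'"
  by (rule ext) (simp add: DERIV_imp_deriv)

lemma smn_const: "smn n (\<lambda>x. c)"
proof (induction n arbitrary: c)
  case 0 then show ?case by simp
next
  case (Suc n)
  have "deriv (\<lambda>x. c) = (\<lambda>x. 0)" by (rule deriv_ext) simp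
  then show ?case using Suc by simp
qed

lemma diff_deriv: "f differentiable (at x) \<Longrightarrow> (f has_real_derivative deriv f x) (at x)"
  by (simp add: DERIV_deriv_iff_real_differentiable)

lemma smn_add: "smn n f \<Longrightarrow> smn n g \<Longrightarrow> smn n (\<lambda>x. f x + g x)"
proof (induction n arbitrary: f g)
  case 0 then show ?case by auto
next
  case (Suc n)
  have "deriv (\<lambda>x. f x + g x) = (\<lambda>x. deriv f x + deriv g x)"
    using Suc.prems by (intro deriv_ext) (auto intro!: derivative_eq_intros diff_deriv)
  then show ?case using Suc by auto
qed

lemma smn_mult: "smn n f \<Longrightarrow> smn n g \<Longrightarrow> smn n (\<lambda>x. f x * g x)"
proof (induction n arbitrary: f g)
  case 0 then show ?case by auto
next
  case (Suc n)
  have "deriv (\<lambda>x. f x * g x) = (\<lambda>x. deriv f x * g x + f x * deriv g x)"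
    using Suc.prems by (intro deriv_ext) (auto intro!: derivative_eq_intros diff_deriv)
  moreover have "smn n (\<lambda>x. deriv f x * g x)" using Suc smn_mono by auto
  moreover have "smn n (\<lambda>x. f x * deriv g x)" using Suc smn_mono by auto
  ultimately show ?case using Suc by (auto intro: smn_add)
qed

lemma smn_inverse: "smn n g \<Longrightarrow> (\<And>x. g x \<noteq> 0) \<Longrightarrow> smn n (\<lambda>x. inverse (g x))"
proof (induction n arbitrary: g)
  case 0
  then show ?case by (auto intro!: differentiable_compose[where f=inverse] simp: field_differentiable_imp_differentiable)
next
  case (Suc n)
  have "deriv (\<lambda>x. inverse (g x)) = (\<lambda>x. - deriv g x * (inverse (g x) * inverse (g x)))"
    using Suc.prems by (intro deriv_ext) (auto intro!: derivative_eq_intros diff_deriv simp: power2_eq_square)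
  moreover have "smn n (\<lambda>x. inverse (g x))" using Suc.IH[OF smn_mono[OF Suc.prems(1)] Suc.prems(2)] .
  moreover have "smn n (\<lambda>x. - deriv g x)" using Suc smn_mult[of n "\<lambda>x. -1" "deriv g"] smn_const by auto
  moreover have "smn n (\<lambda>x. inverse (g x) * inverse (g x))"
    by (rule smn_mult[OF calculation(2) calculation(2)])
  moreover have "\<forall>x. (\<lambda>x. inverse (g x)) differentiable (at x)"
    using calculation(2) smn_diff by blast
  ultimately show ?case using smn_mult[of n "\<lambda>x. - deriv g x" "\<lambda>x. inverse (g x) * inverse (g x)"]
    by simp
qed

lemma smn_affine: "smn n f \<Longrightarrow> smn n (\<lambda>x. f (a * x + b))"
proof (induction n arbitrary: f)
  case 0
  have "(\<lambda>x. f (a * x + b)) differentiable (at x)" for x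
  proof (rule differentiable_compose[where f=f and g="\<lambda>x. a * x + b"])
    show "f differentiable at (a * x + b)" using 0 by simp
  qed simp
  then show ?case by simp
next
  case (Suc n)
  have "deriv (\<lambda>x. f (a * x + b)) = (\<lambda>x. a * deriv f (a * x + b))"
  proof (rule deriv_ext)
    fix x
    have "((\<lambda>x. f (a * x + b)) has_real_derivative deriv f (a * x + b) * a) (at x)"
      by (rule DERIV_chain2[OF diff_deriv]) (use Suc.prems in \<open>auto intro!: derivative_eq_intros\<close>)
    then show "((\<lambda>x. f (a * x + b)) has_real_derivative a * deriv f (a * x + b)) (at x)"
      by (simp add: mult.commute)
  qed
  moreover have "smn n (\<lambda>x. a * deriv f (a * x + b))"
    using Suc by (auto intro!: smn_mult smn_const)
  moreover have "\<forall>x. (\<lambda>x. f (a * x + b)) differentiable (at x)"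
  proof
    fix x
    have "(\<lambda>x. a * x + b) differentiable (at x)" by simp
    then show "(\<lambda>x. f (a * x + b)) differentiable (at x)" using Suc.prems
      by (intro differentiable_compose[where f=f and g="\<lambda>x. a * x + b"]) auto
  qed
  ultimately show ?case by simp
qed

lemma smn_hP: "smn n (hP P)"
proof (induction n arbitrary: P)
  case 0 then show ?case using hP_deriv by (auto simp: real_differentiable_def)
next
  case (Suc n)
  have "deriv (hP P) = hP (dQ P)" by (rule deriv_ext) (rule hP_deriv)
  then show ?case using Suc hP_deriv by (auto simp: real_differentiable_def)
qed


definition stp :: "real \<Rightarrow> real" where
  "stp x = hP 1 x * inverse (hP 1 x + hP 1 (1 - x))"

lemma stp_den_pos: "0 < hP 1 x + hP 1 (1 - x)"
proof (cases "0 < x")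
  case True then show ?thesis using hP_pos[of x] hP_nonneg[of "1-x"] by simp
next
  case False then show ?thesis using hP_pos[of "1-x"] hP_nonneg[of x] by simp
qed

lemma smn_stp: "smn n stp"
proof -
  have a: "smn n (\<lambda>x. hP 1 ((-1) * x + 1))" by (rule smn_affine[OF smn_hP])
  have b: "smn n (\<lambda>x. hP 1 x + hP 1 (1 - x))"
    using smn_add[OF smn_hP a] by simp
  have c: "smn n (\<lambda>x. inverse (hP 1 x + hP 1 (1 - x)))"
    by (rule smn_inverse[OF b]) (use stp_den_pos in \<open>auto simp: less_le\<close>)
  show ?thesis unfolding stp_def[abs_def] by (rule smn_mult[OF smn_hP c])
qed

lemma stp_0: "x \<le> 0 \<Longrightarrow> stp x = 0" by (simp add: stp_def hP_zero)
lemma stp_1: "1 \<le> x \<Longrightarrow> stp x = 1"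
  using stp_den_pos[of x] by (simp add: stp_def hP_zero)
lemma stp_nonneg: "0 \<le> stp x"
  using stp_den_pos[of x] hP_nonneg[of x] by (simp add: stp_def)
lemma stp_le1: "stp x \<le> 1"
  using stp_den_pos[of x] hP_nonneg[of x] hP_nonneg[of "1-x"] by (simp add: stp_def field_simps)

lemma stp_diff: "stp differentiable (at x)"
  using smn_diff[OF smn_stp[of 0]] .

lemma stp_deriv: "(stp has_real_derivative deriv stp x) (at x)"
  using diff_deriv[OF stp_diff] .

lemma stp_deriv_zero: "x \<le> 0 \<or> 1 \<le> x \<Longrightarrow> deriv stp x = 0"
proof (elim disjE)
  assume "x \<le> 0"
  then show ?thesis
    by (intro DERIV_local_min[OF stp_deriv zero_less_one]) (auto simp: stp_0 stp_nonneg)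
next
  assume "1 \<le> x"
  then show ?thesis
    by (intro DERIV_local_max[OF stp_deriv zero_less_one]) (auto simp: stp_1 stp_le1)
qed

lemma cont_dstp: "continuous_on UNIV (deriv stp)"
proof -
  have "smn 1 stp" by (rule smn_stp)
  then have "\<forall>x. deriv stp differentiable (at x)" by (auto simp: smn_diff)
  then show ?thesis
    by (simp add: continuous_at_imp_continuous_on differentiable_imp_continuous_within)
qed

lemma dstp_bound: "\<exists>L>0. \<forall>x. \<bar>deriv stp x\<bar> \<le> L"
proof -
  have "compact (deriv stp ` {0..1})"
    by (rule compact_continuous_image[OF continuous_on_subset[OF cont_dstp]]) auto
  then obtain L where L: "L > 0" "\<forall>y\<in>deriv stp ` {0..1}. norm y \<le> L"
    using compact_imp_bounded bounded_pos by metis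
  have "\<bar>deriv stp x\<bar> \<le> L" for x
  proof (cases "x \<in> {0..1}")
    case True then show ?thesis using L by auto
  next
    case False then show ?thesis using L stp_deriv_zero[of x] by auto
  qed
  then show ?thesis using L by auto
qed

definition chi :: "real \<Rightarrow> real \<Rightarrow> real \<Rightarrow> real \<Rightarrow> real" where
  "chi a b e x = stp ((x - a) / e) * stp ((b - x) / e)"

lemma smn_chi: "smn n (chi a b e)"
proof -
  have "smn n (\<lambda>x. stp ((1/e) * x + (- a / e)))" by (rule smn_affine[OF smn_stp])
  moreover have "smn n (\<lambda>x. stp ((-1/e) * x + (b / e)))" by (rule smn_affine[OF smn_stp])
  ultimately have "smn n (\<lambda>x. stp ((1/e) * x + (- a / e)) * stp ((-1/e) * x + (b / e)))"
    by (rule smn_mult)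
  moreover have "(\<lambda>x. stp ((1/e) * x + (- a / e)) * stp ((-1/e) * x + (b / e))) = chi a b e"
    by (auto simp: chi_def fun_eq_iff diff_divide_distrib add_divide_distrib)
  ultimately show ?thesis by simp
qed

lemma chi_zero: "0 < e \<Longrightarrow> x \<notin> {a..b} \<Longrightarrow> chi a b e x = 0"
proof -
  assume e: "0 < e" and x: "x \<notin> {a..b}"
  show ?thesis
  proof (cases "x < a")
    case True
    then have "(x - a) / e \<le> 0" using e by (simp add: divide_nonpos_pos)
    then show ?thesis by (simp add: chi_def stp_0)
  next
    case False
    then have "(b - x) / e \<le> 0" using e x by (simp add: divide_nonpos_pos)
    then show ?thesis by (simp add: chi_def stp_0)
  qed
qed

lemma chi_test: "0 < e \<Longrightarrow> 0 < a \<Longrightarrow> a \<le> b \<Longrightarrow> b < 1 \<Longrightarrow> test_fun (chi a b e)"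
  unfolding test_fun_def
  using smooth_funpow[of "chi a b e"] smn_chi chi_zero[of e _ a b]
  by (auto simp: smooth_def)

lemma chi_bounds: "0 \<le> chi a b e x" "chi a b e x \<le> 1"
  using stp_nonneg stp_le1 by (auto simp: chi_def intro: mult_le_one)

lemma chi_one: "0 < e \<Longrightarrow> a + e \<le> x \<Longrightarrow> x \<le> b - e \<Longrightarrow> chi a b e x = 1"
  by (auto simp: chi_def stp_1)

lemma deriv_chi:
  assumes e: "0 < e" "2 * e \<le> b - a"
  shows "deriv (chi a b e) x = deriv stp ((x - a) / e) / e - deriv stp ((b - x) / e) / e"
proof -
  have d1: "((\<lambda>x. stp ((x - a) / e)) has_real_derivative deriv stp ((x - a) / e) * (1 / e)) (at x)"
    by (rule DERIV_chain2[OF stp_deriv]) (use e in \<open>auto intro!: derivative_eq_intros\<close>)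
  have d2: "((\<lambda>x. stp ((b - x) / e)) has_real_derivative deriv stp ((b - x) / e) * (- 1 / e)) (at x)"
    by (rule DERIV_chain2[OF stp_deriv]) (use e in \<open>auto intro!: derivative_eq_intros\<close>)
  have "(chi a b e has_real_derivative
      (deriv stp ((x - a) / e) * (1 / e)) * stp ((b - x) / e) + stp ((x - a) / e) * (deriv stp ((b - x) / e) * (- 1 / e))) (at x)"
    unfolding chi_def[abs_def] using DERIV_mult[OF d1 d2] by (simp add: algebra_simps)
  then have d: "deriv (chi a b e) x = (deriv stp ((x - a) / e) * (1 / e)) * stp ((b - x) / e) + stp ((x - a) / e) * (deriv stp ((b - x) / e) * (- 1 / e))"
    by (rule DERIV_imp_deriv)
  show ?thesis
  proof (cases "0 < (x - a) / e \<and> (x - a) / e < 1")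
    case True
    then have "1 \<le> (b - x) / e" using e by (auto simp: field_simps)
    then show ?thesis using d stp_1 stp_deriv_zero by simp
  next
    case False
    then have z: "deriv stp ((x - a) / e) = 0" using stp_deriv_zero by auto
    show ?thesis
    proof (cases "0 < (b - x) / e \<and> (b - x) / e < 1")
      case True
      then have "1 \<le> (x - a) / e" using e by (auto simp: field_simps)
      then show ?thesis using d stp_1 z by simp
    next
      case False
      then have "deriv stp ((b - x) / e) = 0" using stp_deriv_zero by auto
      then show ?thesis using d z by simp
    qed
  qed
qed

lemma cont_deriv_chi: "continuous_on UNIV (deriv (chi a b e))"
proof -
  have "smn 1 (chi a b e)" by (rule smn_chi)
  then have "\<forall>x. deriv (chi a b e) differentiable (at x)" by (auto simp: smn_diff)
  then show ?thesis
    by (simp add: continuous_at_imp_continuous_on differentiable_imp_continuous_within)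
qed

lemma cont_chi: "continuous_on UNIV (chi a b e)"
proof -
  have "smn 0 (chi a b e)" by (rule smn_chi)
  then show ?thesis
    by (simp add: continuous_at_imp_continuous_on differentiable_imp_continuous_within)
qed

lemma I01_sets: "{0<..<1::real} \<in> sets lebesgue" by simp

lemma fin_I01: "finite_measure I01"
  by (rule finite_measure_lebesgue_on) simp

lemma integrable_I01_bounded:
  fixes f :: "real \<Rightarrow> real" and B :: real
  assumes "f \<in> borel_measurable I01" "\<And>x. x \<in> {0<..<1} \<Longrightarrow> \<bar>f x\<bar> \<le> B"
  shows "integrable I01 f"
  by (rule finite_measure.integrable_const_bound[OF fin_I01, where B=B]) (use assms in auto)

lemma integrable_I01_cont_supp:
  fixes f :: "real \<Rightarrow> real"
  assumes f: "continuous_on {0<..<1} f" and cd: "0 < c" "d < 1" and z: "\<And>x. x \<notin> {c..d} \<Longrightarrow> f x = 0"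
  shows "integrable I01 f"
proof -
  have "compact (f ` {c..d})"
    by (rule compact_continuous_image[OF continuous_on_subset[OF f]]) (use cd in auto)
  then obtain L where L: "L > 0" "\<forall>y\<in>f ` {c..d}. norm y \<le> L"
    using compact_imp_bounded bounded_pos by metis
  show ?thesis
  proof (rule integrable_I01_bounded[where B=L])
    show "f \<in> borel_measurable I01"
      by (rule continuous_imp_measurable_on_sets_lebesgue[OF f]) simp
    fix x show "\<bar>f x\<bar> \<le> L" using L z[of x] by (cases "x \<in> {c..d}") (auto simp: order_trans[OF _ norm_ge_zero])
  qed
qed


lemma cont_at_eps:
  fixes f :: "real \<Rightarrow> real"
  assumes "continuous_on {0<..<1} f" "0 < c" "c < 1" "0 < r"
  shows "\<exists>s>0. \<forall>x. \<bar>x - c\<bar> < s \<longrightarrow> \<bar>f x - f c\<bar> < r"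
proof -
  have "isCont f c" using assms continuous_on_eq_continuous_at[of "{0<..<1}" f] by auto
  then have "f \<midarrow>c\<rightarrow> f c" by (simp add: isCont_def)
  then obtain s where s: "s > 0" "\<forall>x. x \<noteq> c \<and> norm (x - c) < s \<longrightarrow> norm (f x - f c) < r"
    using assms(4) unfolding LIM_eq by blast
  then show ?thesis using assms(4) by (intro exI[of _ s]) (auto, metis abs_zero diff_self)
qed

lemma LINT_supp:
  fixes F :: "real \<Rightarrow> real"
  assumes F: "continuous_on {0<..<1} F" and lh: "0 < lo" "lo \<le> hi" "hi < 1"
    and z: "\<And>x. x \<notin> {lo..hi} \<Longrightarrow> F x = 0"
  shows "integrable I01 F" "(LINT x|I01. F x) = integral {lo..hi} F"
proof -
  show i: "integrable I01 F" by (rule integrable_I01_cont_supp[OF F lh(1) lh(3) z])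
  have "(LINT x|I01. F x) = integral {0<..<1} F"
    by (rule lebesgue_integral_eq_integral[OF i]) simp
  also have "F = (\<lambda>x. if x \<in> {lo..hi} then F x else 0)" using z by auto
  then have "integral {0<..<1} F = integral ({lo..hi} \<inter> {0<..<1}) F"
    by (metis Henstock_Kurzweil_Integration.integral_restrict_Int)
  also have "{lo..hi} \<inter> {0<..<1} = {lo..hi}" using lh by auto
  finally show "(LINT x|I01. F x) = integral {lo..hi} F" .
qed

lemma kernel_lim:
  fixes f :: "real \<Rightarrow> real" and K :: "nat \<Rightarrow> real \<Rightarrow> real"
  assumes f: "continuous_on {0<..<1} f"
    and c: "0 < c" "c < 1"
    and lohi: "\<And>n. 0 < lo n \<and> lo n \<le> c \<and> c \<le> hi n \<and> hi n < 1 \<and> hi n - lo n = e n"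
    and e: "e \<longlonglongrightarrow> 0" "\<And>n. e n > 0"
    and Kc: "\<And>n. continuous_on UNIV (K n)"
    and Kz: "\<And>n x. x \<notin> {lo n..hi n} \<Longrightarrow> K n x = 0"
    and Ki: "\<And>n. integral {lo n..hi n} (K n) = 1"
    and Kb: "\<And>n x. \<bar>K n x\<bar> \<le> L / e n"
    and L: "0 < L"
  shows "(\<lambda>n. LINT x|I01. f x * K n x) \<longlonglongrightarrow> f c"
proof (rule LIMSEQ_I)
  fix r :: real assume r: "0 < r"
  define \<eta> where "\<eta> = r / (2 * L)"
  have eta: "0 < \<eta>" using r L by (simp add: \<eta>_def)
  obtain s where s: "s > 0" "\<forall>x. \<bar>x - c\<bar> < s \<longrightarrow> \<bar>f x - f c\<bar> < \<eta>"
    using cont_at_eps[OF f c eta] by blast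
  obtain N where N: "\<forall>n\<ge>N. norm (e n - 0) < s" using LIMSEQ_D[OF e(1) s(1)] by blast
  have "norm ((LINT x|I01. f x * K n x) - f c) < r" if n: "n \<ge> N" for n
  proof -
    let ?lo = "lo n" and ?hi = "hi n"
    have lh: "0 < ?lo" "?lo \<le> ?hi" "?hi < 1" using lohi[of n] e(2)[of n] by auto
    have fc: "continuous_on {lo n..hi n} f"
      by (rule continuous_on_subset[OF f]) (use lh in auto)
    have Kc': "continuous_on {lo n..hi n} (K n)" by (rule continuous_on_subset[OF Kc]) auto
    have cF: "continuous_on {0<..<1} (\<lambda>x. f x * K n x)"
      by (intro continuous_intros f continuous_on_subset[OF Kc]) auto
    have eq: "(LINT x|I01. f x * K n x) = integral {lo n..hi n} (\<lambda>x. f x * K n x)"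
      by (rule LINT_supp(2)[OF cF lh]) (simp add: Kz)
    have i1: "(\<lambda>x. f x * K n x) integrable_on {lo n..hi n}"
      by (intro integrable_continuous_interval continuous_intros fc Kc')
    have i2: "(\<lambda>x. f c * K n x) integrable_on {lo n..hi n}"
      by (intro integrable_continuous_interval continuous_intros Kc')
    have "integral {lo n..hi n} (\<lambda>x. f x * K n x) - f c
        = integral {lo n..hi n} (\<lambda>x. f x * K n x) - integral {lo n..hi n} (\<lambda>x. f c * K n x)"
      using Ki[of n] by simp
    also have "\<dots> = integral {lo n..hi n} (\<lambda>x. (f x - f c) * K n x)"
      by (subst integral_diff[OF i1 i2, symmetric]) (simp add: algebra_simps)
    finally have d: "(LINT x|I01. f x * K n x) - f c = integral {lo n..hi n} (\<lambda>x. (f x - f c) * K n x)"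
      using eq by simp
    have b: "norm ((f t - f c) * K n t) \<le> \<eta> * (L / e n)" if t: "t \<in> {lo n..hi n}" for t
    proof -
      have "\<bar>t - c\<bar> \<le> e n" using t lohi[of n] by auto
      also have "e n < s" using N n e(2)[of n] by auto
      finally have "\<bar>f t - f c\<bar> < \<eta>" using s by auto
      then have "\<bar>f t - f c\<bar> * \<bar>K n t\<bar> \<le> \<eta> * (L / e n)"
        using Kb[of n t] eta by (intro mult_mono) auto
      then show ?thesis by (simp add: abs_mult)
    qed
    have "norm (integral {lo n..hi n} (\<lambda>x. (f x - f c) * K n x)) \<le> \<eta> * (L / e n) * (hi n - lo n)"
      by (rule integral_bound[OF lh(2) _ b]) (intro continuous_intros fc Kc')
    also have "\<dots> = \<eta> * L" using lohi[of n] e(2)[of n] by simp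
    also have "\<dots> < r" using r L by (simp add: \<eta>_def)
    finally show ?thesis using d by simp
  qed
  then show "\<exists>no. \<forall>n\<ge>no. norm ((LINT x|I01. f x * K n x) - f c) < r" by blast
qed

lemma chi_zero': "0 < e \<Longrightarrow> x \<le> a \<or> b \<le> x \<Longrightarrow> chi a b e x = 0"
proof -
  assume e: "0 < e" and x: "x \<le> a \<or> b \<le> x"
  then show ?thesis
  proof (elim disjE)
    assume "x \<le> a"
    then have "(x - a) / e \<le> 0" using e by (simp add: divide_nonpos_pos)
    then show ?thesis by (simp add: chi_def stp_0)
  next
    assume "b \<le> x"
    then have "(b - x) / e \<le> 0" using e by (simp add: divide_nonpos_pos)
    then show ?thesis by (simp add: chi_def stp_0)
  qed
qed

lemma cont_dstp_comp: "continuous_on UNIV (\<lambda>x. deriv stp (p * x + q) / e)"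
proof -
  have "continuous_on UNIV (\<lambda>x. deriv stp (p * x + q))"
    by (rule continuous_on_compose2[OF cont_dstp]) (auto intro!: continuous_intros)
  then have "continuous_on UNIV (\<lambda>x. deriv stp (p * x + q) * inverse e)" by (intro continuous_intros)
  then show ?thesis by (simp add: divide_inverse)
qed

lemma weak_FT:
  fixes f g :: "real \<Rightarrow> real"
  assumes f: "continuous_on {0<..<1} f" and g: "integrable I01 g" and wd: "weak_deriv f g"
    and ab: "0 < a" "a < b" "b < 1"
  shows "f b - f a = (LINT x|I01. indicator {a<..<b} x * g x)"
proof -
  define e where "e n = (b - a) / 2 * inverse (real (Suc n))" for n
  have epos: "e n > 0" for n using ab by (simp add: e_def)
  have e2: "2 * e n \<le> b - a" for n
  proof -
    have "inverse (real (Suc n)) \<le> 1" by (simp add: inverse_le_1_iff)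
    then have "(b - a) / 2 * inverse (real (Suc n)) \<le> (b - a) / 2 * 1"
      using ab by (intro mult_left_mono) auto
    then show ?thesis by (simp add: e_def)
  qed
  have elim: "e \<longlonglongrightarrow> 0"
    unfolding e_def using tendsto_mult[OF tendsto_const LIMSEQ_inverse_real_of_nat, of "(b-a)/2"] by simp
  obtain L where L: "L > 0" "\<And>x. \<bar>deriv stp x\<bar> \<le> L" using dstp_bound by blast
  define Kp where "Kp n x = deriv stp ((x - a) / e n) / e n" for n x
  define Km where "Km n x = deriv stp ((b - x) / e n) / e n" for n x
  have Kpc: "continuous_on UNIV (Kp n)" for n
    using cont_dstp_comp[of "1 / e n" "- a / e n" "e n"]
    by (simp add: Kp_def[abs_def] diff_divide_distrib)
  have Kmc: "continuous_on UNIV (Km n)" for n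
    using cont_dstp_comp[of "- 1 / e n" "b / e n" "e n"]
    by (simp add: Km_def[abs_def] diff_divide_distrib)
  have limp: "(\<lambda>n. LINT x|I01. f x * Kp n x) \<longlonglongrightarrow> f a"
  proof (rule kernel_lim[OF f ab(1) _ _ elim epos Kpc, where lo="\<lambda>n. a" and hi="\<lambda>n. a + e n" and L=L])
    show "a < 1" using ab by simp
    fix n
    show "0 < a \<and> a \<le> a \<and> a \<le> a + e n \<and> a + e n < 1 \<and> a + e n - a = e n"
      using ab epos[of n] e2[of n] by auto
    fix x
    show "x \<notin> {a..a + e n} \<Longrightarrow> Kp n x = 0"
      using epos[of n] by (auto simp: Kp_def field_simps intro!: stp_deriv_zero)
    show "\<bar>Kp n x\<bar> \<le> L / e n"
      using epos[of n] L(2) by (simp add: Kp_def divide_right_mono)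
  next
    show "0 < L" by fact
    fix n
    have d: "((\<lambda>x. stp ((x - a) / e n)) has_vector_derivative Kp n x) (at x within {a..a + e n})" for x
    proof -
      have "((\<lambda>x. stp ((x - a) / e n)) has_real_derivative deriv stp ((x - a) / e n) * (1 / e n)) (at x)"
        by (rule DERIV_chain2[OF stp_deriv]) (use epos[of n] in \<open>auto intro!: derivative_eq_intros\<close>)
      then show ?thesis
        by (auto simp: Kp_def has_real_derivative_iff_has_vector_derivative intro: has_vector_derivative_at_within)
    qed
    have "(Kp n has_integral (stp ((a + e n - a) / e n) - stp ((a - a) / e n))) {a..a + e n}"
      by (rule fundamental_theorem_of_calculus[OF _ d]) (use epos[of n] in auto)
    then show "integral {a..a + e n} (Kp n) = 1"
      using epos[of n] by (simp add: integral_unique stp_0 stp_1)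
  qed
  have limm: "(\<lambda>n. LINT x|I01. f x * Km n x) \<longlonglongrightarrow> f b"
  proof (rule kernel_lim[OF f _ ab(3) _ elim epos Kmc, where lo="\<lambda>n. b - e n" and hi="\<lambda>n. b" and L=L])
    show "0 < b" using ab by simp
    fix n
    show "0 < b - e n \<and> b - e n \<le> b \<and> b \<le> b \<and> b < 1 \<and> b - (b - e n) = e n"
      using ab epos[of n] e2[of n] by auto
    fix x
    show "x \<notin> {b - e n..b} \<Longrightarrow> Km n x = 0"
      using epos[of n] by (auto simp: Km_def field_simps intro!: stp_deriv_zero)
    show "\<bar>Km n x\<bar> \<le> L / e n"
      using epos[of n] L(2) by (simp add: Km_def divide_right_mono)
  next
    show "0 < L" by fact
    fix n
    have d: "((\<lambda>x. - stp ((b - x) / e n)) has_vector_derivative Km n x) (at x within {b - e n..b})" for x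
    proof -
      have "((\<lambda>x. stp ((b - x) / e n)) has_real_derivative deriv stp ((b - x) / e n) * (- 1 / e n)) (at x)"
        by (rule DERIV_chain2[OF stp_deriv]) (use epos[of n] in \<open>auto intro!: derivative_eq_intros\<close>)
      then have "((\<lambda>x. - stp ((b - x) / e n)) has_real_derivative - (deriv stp ((b - x) / e n) * (- 1 / e n))) (at x)"
        by (rule DERIV_minus)
      then show ?thesis
        by (auto simp: Km_def has_real_derivative_iff_has_vector_derivative intro: has_vector_derivative_at_within)
    qed
    have "(Km n has_integral (- stp ((b - b) / e n) - - stp ((b - (b - e n)) / e n))) {b - e n..b}"
      by (rule fundamental_theorem_of_calculus[OF _ d]) (use epos[of n] in auto)
    then show "integral {b - e n..b} (Km n) = 1"
      using epos[of n] by (simp add: integral_unique stp_0 stp_1)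
  qed
  have cf: "continuous_on {0<..<1} (\<lambda>x. f x * Kp n x)" "continuous_on {0<..<1} (\<lambda>x. f x * Km n x)" for n
    by (intro continuous_intros f continuous_on_subset[OF Kpc] continuous_on_subset[OF Kmc]; simp)+
  have ip: "integrable I01 (\<lambda>x. f x * Kp n x)" for n
  proof (rule LINT_supp(1)[OF cf(1), of a "a + e n"])
    show "0 < a" "a \<le> a + e n" "a + e n < 1" using ab epos[of n] e2[of n] by auto
    fix x show "x \<notin> {a..a + e n} \<Longrightarrow> f x * Kp n x = 0"
      using epos[of n] by (auto simp: Kp_def field_simps intro!: stp_deriv_zero)
  qed
  have im: "integrable I01 (\<lambda>x. f x * Km n x)" for n
  proof (rule LINT_supp(1)[OF cf(2), of "b - e n" b])
    show "0 < b - e n" "b - e n \<le> b" "b < 1" using ab epos[of n] e2[of n] by auto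
    fix x show "x \<notin> {b - e n..b} \<Longrightarrow> f x * Km n x = 0"
      using epos[of n] by (auto simp: Km_def field_simps intro!: stp_deriv_zero)
  qed
  have eqn: "(LINT x|I01. f x * deriv (chi a b (e n)) x) = (LINT x|I01. f x * Kp n x) - (LINT x|I01. f x * Km n x)" for n
  proof -
    have "(\<lambda>x. f x * deriv (chi a b (e n)) x) = (\<lambda>x. f x * Kp n x - f x * Km n x)"
      by (rule ext) (simp only: deriv_chi[OF epos e2] Kp_def Km_def right_diff_distrib)
    then show ?thesis using Bochner_Integration.integral_diff[OF ip im] by simp
  qed
  have wdn: "(LINT x|I01. f x * deriv (chi a b (e n)) x) = - (LINT x|I01. g x * chi a b (e n) x)" for n
    using wd chi_test[OF epos ab(1) less_imp_le[OF ab(2)] ab(3)] unfolding weak_deriv_def by blast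
  have limg: "(\<lambda>n. LINT x|I01. g x * chi a b (e n) x) \<longlonglongrightarrow> (LINT x|I01. indicator {a<..<b} x * g x)"
  proof (rule integral_dominated_convergence[where w="\<lambda>x. \<bar>g x\<bar>"])
    have gm: "g \<in> borel_measurable I01" using g by (rule borel_measurable_integrable)
    have "indicator {a<..<b} \<in> borel_measurable I01"
      by (rule measurable_restrict_space1) (rule borel_measurable_indicator, simp)
    then show "(\<lambda>x. indicator {a<..<b} x * g x) \<in> borel_measurable I01"
      using gm by (rule borel_measurable_times)
    fix n
    have "chi a b (e n) \<in> borel_measurable I01"
      by (rule continuous_imp_measurable_on_sets_lebesgue[OF continuous_on_subset[OF cont_chi]]) auto
    then show "(\<lambda>x. g x * chi a b (e n) x) \<in> borel_measurable I01"
      using gm by (intro borel_measurable_times)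
    show "integrable I01 (\<lambda>x. \<bar>g x\<bar>)" using g by (rule integrable_abs)
    show "AE x in I01. norm (g x * chi a b (e n) x) \<le> \<bar>g x\<bar>"
      using chi_bounds[of a b "e n"] by (auto simp: abs_mult intro!: mult_left_le)
  next
    show "AE x in I01. (\<lambda>n. g x * chi a b (e n) x) \<longlonglongrightarrow> indicator {a<..<b} x * g x"
    proof (rule AE_I2)
      fix x
      show "(\<lambda>n. g x * chi a b (e n) x) \<longlonglongrightarrow> indicator {a<..<b} x * g x"
      proof (cases "a < x \<and> x < b")
        case True
        have "0 < min (x - a) (b - x)" using True by simp
        from LIMSEQ_D[OF elim this] obtain N where N: "\<forall>n\<ge>N. norm (e n - 0) < min (x - a) (b - x)" by blast
        have "eventually (\<lambda>n. g x * chi a b (e n) x = indicator {a<..<b} x * g x) sequentially"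
          unfolding eventually_sequentially
          using N True epos by (intro exI[of _ N]) (auto simp: chi_one)
        then show ?thesis by (rule tendsto_eventually)
      next
        case False
        then have "chi a b (e n) x = 0" for n using chi_zero'[OF epos] by auto
        then show ?thesis using False by simp
      qed
    qed
  qed
  have "(\<lambda>n. (LINT x|I01. f x * Kp n x) - (LINT x|I01. f x * Km n x)) \<longlonglongrightarrow> f a - f b"
    by (intro tendsto_diff limp limm)
  moreover have "(\<lambda>n. (LINT x|I01. f x * Kp n x) - (LINT x|I01. f x * Km n x))
      = (\<lambda>n. - (LINT x|I01. g x * chi a b (e n) x))"
    using eqn wdn by auto
  ultimately have "(\<lambda>n. - (LINT x|I01. g x * chi a b (e n) x)) \<longlonglongrightarrow> f a - f b" by simp
  moreover have "(\<lambda>n. - (LINT x|I01. g x * chi a b (e n) x)) \<longlonglongrightarrow> - (LINT x|I01. indicator {a<..<b} x * g x)"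
    by (intro tendsto_minus limg)
  ultimately have "f a - f b = - (LINT x|I01. indicator {a<..<b} x * g x)"
    by (rule LIMSEQ_unique)
  then show ?thesis by simp
qed


lemma ind_meas: "S \<in> sets lebesgue \<Longrightarrow> indicator S \<in> borel_measurable I01"
  by (rule measurable_restrict_space1) (rule borel_measurable_indicator)

lemma integrable_ind:
  fixes g :: "real \<Rightarrow> real"
  assumes g: "integrable I01 g" and S: "S \<in> sets lebesgue"
  shows "integrable I01 (\<lambda>x. indicator S x * g x)"
proof (rule Bochner_Integration.integrable_bound[OF g])
  show "(\<lambda>x. indicator S x * g x) \<in> borel_measurable I01"
    using ind_meas[OF S] borel_measurable_integrable[OF g] by (rule borel_measurable_times)
  show "AE x in I01. norm (indicator S x * g x) \<le> norm (g x)"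
    by (auto simp: indicator_def)
qed

lemma zero_on_intervals_AE:
  fixes h :: "real \<Rightarrow> real"
  assumes h: "integrable I01 h"
    and z: "\<And>a b. 0 < a \<Longrightarrow> a < b \<Longrightarrow> b < 1 \<Longrightarrow> (LINT x|I01. indicator {a<..<b} x * h x) = 0"
  shows "AE x in I01. h x = 0"
proof -
  have z1: "(LINT x|I01. indicator {c<..<1} x * h x) = 0" if c: "0 \<le> c" "c < 1" for c
  proof -
    define d where "d n = (1 - c) / 4 * inverse (real (Suc n))" for n
    have dpos: "d n > 0" for n using c by (simp add: d_def)
    have d4: "4 * d n \<le> 1 - c" for n
    proof -
      have "inverse (real (Suc n)) \<le> 1" by (simp add: inverse_le_1_iff)
      then have "(1 - c) / 4 * inverse (real (Suc n)) \<le> (1 - c) / 4 * 1"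
        using c by (intro mult_left_mono) auto
      then show ?thesis by (simp add: d_def)
    qed
    have dlim: "d \<longlonglongrightarrow> 0"
      unfolding d_def using tendsto_mult[OF tendsto_const LIMSEQ_inverse_real_of_nat, of "(1-c)/4"] by simp
    have "(\<lambda>n. LINT x|I01. indicator {c + d n<..<1 - d n} x * h x) \<longlonglongrightarrow> (LINT x|I01. indicator {c<..<1} x * h x)"
    proof (rule integral_dominated_convergence[where w="\<lambda>x. \<bar>h x\<bar>"])
      have hm: "h \<in> borel_measurable I01" using h by (rule borel_measurable_integrable)
      show "(\<lambda>x. indicator {c<..<1} x * h x) \<in> borel_measurable I01"
        using ind_meas[of "{c<..<1}"] hm by (intro borel_measurable_times) auto
      fix n
      show "(\<lambda>x. indicator {c + d n<..<1 - d n} x * h x) \<in> borel_measurable I01"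
        using ind_meas[of "{c + d n<..<1 - d n}"] hm by (intro borel_measurable_times) auto
      show "integrable I01 (\<lambda>x. \<bar>h x\<bar>)" using h by (rule integrable_abs)
      show "AE x in I01. norm (indicator {c + d n<..<1 - d n} x * h x) \<le> \<bar>h x\<bar>"
        by (auto simp: indicator_def)
    next
      show "AE x in I01. (\<lambda>n. indicator {c + d n<..<1 - d n} x * h x) \<longlonglongrightarrow> indicator {c<..<1} x * h x"
      proof (rule AE_I2)
        fix x
        show "(\<lambda>n. indicator {c + d n<..<1 - d n} x * h x) \<longlonglongrightarrow> indicator {c<..<1} x * h x"
        proof (cases "c < x \<and> x < 1")
          case True
          have "0 < min (x - c) (1 - x)" using True by simp
          from LIMSEQ_D[OF dlim this] obtain N where N: "\<forall>n\<ge>N. norm (d n - 0) < min (x - c) (1 - x)" by blast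
          have "eventually (\<lambda>n. indicator {c + d n<..<1 - d n} x * h x = indicator {c<..<1} x * h x) sequentially"
            unfolding eventually_sequentially
            using N True dpos by (intro exI[of _ N]) (auto simp: indicator_def)
          then show ?thesis by (rule tendsto_eventually)
        next
          case False
          have "(\<lambda>n. indicator {c + d n<..<1 - d n} x * h x) = (\<lambda>n. indicator {c<..<1} x * h x)"
          proof (rule ext)
            fix n show "indicator {c + d n<..<1 - d n} x * h x = indicator {c<..<1} x * h x"
              using dpos[of n] False by (auto simp: indicator_def)
          qed
          then show ?thesis by simp
        qed
      qed
    qed
    moreover have "(LINT x|I01. indicator {c + d n<..<1 - d n} x * h x) = 0" for n
      using z[of "c + d n" "1 - d n"] dpos[of n] d4[of n] c by auto
    ultimately show ?thesis using LIMSEQ_unique[OF _ tendsto_const[of 0]] by simp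
  qed
  define H where "H x = indicator {0<..<1::real} x * h x" for x
  have intH: "integrable lebesgue H"
    using h integrable_restrict_space[of "{0<..<1::real}" lebesgue h] by (simp add: H_def[abs_def])
  have HI: "(LINT y|lebesgue. indicator {x<..} y * H y) = 0" for x
  proof -
    have "(LINT y|lebesgue. indicator {x<..} y * H y) = (LINT y|I01. indicator {x<..} y * h y)"
      using integral_restrict_space[of "{0<..<1::real}" lebesgue "\<lambda>y. indicator {x<..} y * h y"]
      by (simp add: H_def[abs_def] mult.left_commute)
    also have "\<dots> = 0"
    proof (cases "x < 1")
      case True
      have "(LINT y|I01. indicator {x<..} y * h y) = (LINT y|I01. indicator {max x 0<..<1} y * h y)"
        by (rule Bochner_Integration.integral_cong) (auto simp: indicator_def)
      also have "\<dots> = 0" using z1[of "max x 0"] True by simp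
      finally show ?thesis .
    next
      case False
      have "(LINT y|I01. indicator {x<..} y * h y) = (LINT y|I01. 0)"
        by (rule Bochner_Integration.integral_cong) (use False in \<open>auto simp: indicator_def\<close>)
      then show ?thesis by simp
    qed
    finally show ?thesis .
  qed
  have "H \<in> borel_measurable (completion lborel)" using intH by auto
  from completion_ex_borel_measurable_real[OF this]
  obtain H' where H'm: "H' \<in> borel_measurable lborel" and HH': "AE x in lborel. H x = H' x" by blast
  have HH'c: "AE x in lebesgue. H x = H' x" using HH' by (rule AE_completion)
  have intH': "integrable lborel H'"
  proof -
    have "H' \<in> borel_measurable lebesgue"
      using H'm by (auto intro: measurable_completion)
    then have "integrable lebesgue H'" using intH HH'c by (intro integrable_cong_AE_imp[of lebesgue H H']) auto
    then show ?thesis using integrable_completion[OF H'm] by simp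
  qed
  have HI': "(LINT y|lborel. indicator {x<..} y * H' y) = 0" for x
  proof -
    have m: "(\<lambda>y. indicator {x<..} y * H' y) \<in> borel_measurable lborel" using H'm by measurable
    have "(LINT y|lborel. indicator {x<..} y * H' y) = (LINT y|lebesgue. indicator {x<..} y * H' y)"
      using integral_completion[OF m] by simp
    also have "\<dots> = (LINT y|lebesgue. indicator {x<..} y * H y)"
    proof (rule integral_cong_AE)
      show "(\<lambda>y. indicator {x<..} y * H' y) \<in> borel_measurable lebesgue"
        by (rule measurable_completion[OF m])
      have "H \<in> borel_measurable lebesgue" using intH by auto
      then show "(\<lambda>y. indicator {x<..} y * H y) \<in> borel_measurable lebesgue"
        by (intro borel_measurable_times borel_measurable_indicator) auto
      show "AE y in lebesgue. indicator {x<..} y * H' y = indicator {x<..} y * H y"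
        using HH'c by eventually_elim simp
    qed
    finally show ?thesis using HI by simp
  qed
  define P where "P y = ennreal (H' y)" for y
  define N where "N y = ennreal (- H' y)" for y
  have Pm: "P \<in> borel_measurable lborel" "N \<in> borel_measurable lborel" using H'm by (auto simp: P_def[abs_def] N_def[abs_def])
  have eqx: "(\<integral>\<^sup>+ y. P y * indicator {x<..} y \<partial>lborel) = (\<integral>\<^sup>+ y. N y * indicator {x<..} y \<partial>lborel)
      \<and> (\<integral>\<^sup>+ y. P y * indicator {x<..} y \<partial>lborel) < \<infinity>" for x
  proof -
    have i: "integrable lborel (\<lambda>y. indicator {x<..} y * H' y)"
      using integrable_mult_indicator[of "{x<..}" lborel H'] intH' by simp
    obtain r q where rq: "0 \<le> r" "0 \<le> q"
      "(\<integral>\<^sup>+y. ennreal (indicator {x<..} y * H' y) \<partial>lborel) = ennreal r"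
      "(\<integral>\<^sup>+y. ennreal (- (indicator {x<..} y * H' y)) \<partial>lborel) = ennreal q"
      "(LINT y|lborel. indicator {x<..} y * H' y) = r - q"
      by (rule integrableE[OF i]) blast
    have e1: "(\<lambda>y. ennreal (indicator {x<..} y * H' y)) = (\<lambda>y. P y * indicator {x<..} y)"
      by (auto simp: P_def indicator_def)
    have e2: "(\<lambda>y. ennreal (- (indicator {x<..} y * H' y))) = (\<lambda>y. N y * indicator {x<..} y)"
      by (auto simp: N_def indicator_def)
    have "r = q" using rq(5) HI'[of x] by simp
    then show ?thesis using rq e1 e2 by simp
  qed
  have dens: "density lborel P = density lborel N"
  proof (rule measure_eqI_lessThan)
    show "sets (density lborel P) = sets borel" "sets (density lborel N) = sets borel" by auto
    fix x
    have eP: "emeasure (density lborel P) {x<..} = (\<integral>\<^sup>+ y. P y * indicator {x<..} y \<partial>lborel)"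
      using Pm by (subst emeasure_density) auto
    have eN: "emeasure (density lborel N) {x<..} = (\<integral>\<^sup>+ y. N y * indicator {x<..} y \<partial>lborel)"
      using Pm by (subst emeasure_density) auto
    show "emeasure (density lborel P) {x<..} < \<infinity>"
      unfolding eP using eqx[of x] by blast
    show "emeasure (density lborel P) {x<..} = emeasure (density lborel N) {x<..}"
      unfolding eP eN using eqx[of x] by blast
  qed
  have finP: "integral\<^sup>N lborel P \<noteq> \<infinity>"
    using integrableD(2)[OF intH'] by (simp add: P_def[abs_def])
  have "AE x in lborel. P x = N x"
    using finite_density_unique[OF Pm _ _ finP] dens by simp
  then have "AE x in lborel. H' x = 0"
    by eventually_elim (auto simp: P_def N_def, smt (verit) ennreal_eq_0_iff ennreal_neg)
  then have "AE x in lborel. H x = 0" using HH' by eventually_elim simp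
  then have "AE x in lebesgue. H x = 0" by (rule AE_completion)
  then have "AE x in lebesgue. x \<in> {0<..<1} \<longrightarrow> h x = 0"
    by eventually_elim (auto simp: H_def)
  then show ?thesis
    by (subst AE_restrict_space_iff) auto
qed

lemma weak_unique:
  fixes f g1 g2 :: "real \<Rightarrow> real"
  assumes f: "continuous_on {0<..<1} f" and g: "integrable I01 g1" "integrable I01 g2"
    and w: "weak_deriv f g1" "weak_deriv f g2"
  shows "AE x in I01. g1 x = g2 x"
proof -
  have "AE x in I01. g1 x - g2 x = 0"
  proof (rule zero_on_intervals_AE)
    show "integrable I01 (\<lambda>x. g1 x - g2 x)" using g by auto
    fix a b :: real assume ab: "0 < a" "a < b" "b < 1"
    have i: "integrable I01 (\<lambda>x. indicator {a<..<b} x * g1 x)" "integrable I01 (\<lambda>x. indicator {a<..<b} x * g2 x)"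
      using g by (auto intro!: integrable_ind)
    have "(LINT x|I01. indicator {a<..<b} x * (g1 x - g2 x))
        = (LINT x|I01. indicator {a<..<b} x * g1 x - indicator {a<..<b} x * g2 x)"
      by (simp add: right_diff_distrib)
    also have "\<dots> = (LINT x|I01. indicator {a<..<b} x * g1 x) - (LINT x|I01. indicator {a<..<b} x * g2 x)"
      by (rule Bochner_Integration.integral_diff[OF i])
    also have "\<dots> = 0" using weak_FT[OF f g(1) w(1) ab] weak_FT[OF f g(2) w(2) ab] by simp
    finally show "(LINT x|I01. indicator {a<..<b} x * (g1 x - g2 x)) = 0" .
  qed
  then show ?thesis by eventually_elim simp
qed


section \<open>L^p facts\<close>

lemma Lp_integrable:
  fixes g :: "real \<Rightarrow> real"
  assumes p: "1 \<le> p" and g: "Lp p g"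
  shows "integrable I01 g"
proof (rule Bochner_Integration.integrable_bound[where f="\<lambda>x. 1 + \<bar>g x\<bar> powr p"])
  have "integrable I01 (\<lambda>x. 1::real)" using finite_measure.integrable_const[OF fin_I01] .
  then show "integrable I01 (\<lambda>x. 1 + \<bar>g x\<bar> powr p)"
    using g by (intro Bochner_Integration.integrable_add) (auto simp: Lp_def)
  show "g \<in> borel_measurable I01" using g by (simp add: Lp_def)
  show "AE x in I01. norm (g x) \<le> norm (1 + \<bar>g x\<bar> powr p)"
  proof (rule AE_I2)
    fix x
    show "norm (g x) \<le> norm (1 + \<bar>g x\<bar> powr p)"
    proof (cases "\<bar>g x\<bar> \<le> 1")
      case True then show ?thesis using powr_ge_zero[of "\<bar>g x\<bar>" p] by (simp del: powr_ge_zero)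
    next
      case False
      then have "\<bar>g x\<bar> powr 1 \<le> \<bar>g x\<bar> powr p" using p by (intro powr_mono) auto
      then show ?thesis using False by simp
    qed
  qed
qed

lemma Lp_cong:
  assumes "\<And>x. x \<in> {0<..<1} \<Longrightarrow> f x = g x" "Lp p f"
  shows "Lp p g"
proof -
  have "f \<in> borel_measurable I01 \<longleftrightarrow> g \<in> borel_measurable I01"
    by (rule measurable_cong) (use assms in auto)
  then have "g \<in> borel_measurable I01" using assms by (auto simp: Lp_def)
  moreover have "integrable I01 (\<lambda>x. \<bar>f x\<bar> powr p) \<longleftrightarrow> integrable I01 (\<lambda>x. \<bar>g x\<bar> powr p)"
    by (rule Bochner_Integration.integrable_cong) (use assms in auto)
  then have "integrable I01 (\<lambda>x. \<bar>g x\<bar> powr p)" using assms by (auto simp: Lp_def)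
  ultimately show ?thesis by (simp add: Lp_def)
qed

lemma Lp_add:
  fixes f h :: "real \<Rightarrow> real"
  assumes p: "1 \<le> p" and f: "Lp p f" and h: "Lp p h"
  shows "Lp p (\<lambda>x. f x + h x)"
proof -
  have fm: "f \<in> borel_measurable I01" and hm: "h \<in> borel_measurable I01"
    using f h by (auto simp: Lp_def)
  have m: "(\<lambda>x. f x + h x) \<in> borel_measurable I01" using fm hm by measurable
  have "integrable I01 (\<lambda>x. \<bar>f x + h x\<bar> powr p)"
  proof (rule Bochner_Integration.integrable_bound[where f="\<lambda>x. 2 powr p * (\<bar>f x\<bar> powr p + \<bar>h x\<bar> powr p)"])
    show "integrable I01 (\<lambda>x. 2 powr p * (\<bar>f x\<bar> powr p + \<bar>h x\<bar> powr p))"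
      using f h by (auto simp: Lp_def)
    show "(\<lambda>x. \<bar>f x + h x\<bar> powr p) \<in> borel_measurable I01" using m by measurable
    show "AE x in I01. norm (\<bar>f x + h x\<bar> powr p) \<le> norm (2 powr p * (\<bar>f x\<bar> powr p + \<bar>h x\<bar> powr p))"
    proof (rule AE_I2)
      fix x
      have "\<bar>f x + h x\<bar> \<le> 2 * max \<bar>f x\<bar> \<bar>h x\<bar>" by auto
      then have "\<bar>f x + h x\<bar> powr p \<le> (2 * max \<bar>f x\<bar> \<bar>h x\<bar>) powr p"
        using p by (intro powr_mono2) auto
      also have "\<dots> = 2 powr p * max \<bar>f x\<bar> \<bar>h x\<bar> powr p" by (simp add: powr_mult)
      also have "max \<bar>f x\<bar> \<bar>h x\<bar> powr p \<le> \<bar>f x\<bar> powr p + \<bar>h x\<bar> powr p"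
        by (cases "\<bar>f x\<bar> \<le> \<bar>h x\<bar>") (auto simp: max_def)
      then have "2 powr p * max \<bar>f x\<bar> \<bar>h x\<bar> powr p \<le> 2 powr p * (\<bar>f x\<bar> powr p + \<bar>h x\<bar> powr p)"
        by (intro mult_left_mono) auto
      finally show "norm (\<bar>f x + h x\<bar> powr p) \<le> norm (2 powr p * (\<bar>f x\<bar> powr p + \<bar>h x\<bar> powr p))"
        by simp
    qed
  qed
  then show ?thesis using m by (simp add: Lp_def)
qed

lemma Lp_bounded:
  fixes f :: "real \<Rightarrow> real"
  assumes p: "0 \<le> p" and m: "f \<in> borel_measurable I01" and b: "\<And>x. x \<in> {0<..<1} \<Longrightarrow> \<bar>f x\<bar> \<le> K"
  shows "Lp p f"
proof -
  have "integrable I01 (\<lambda>x. \<bar>f x\<bar> powr p)"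
  proof (rule integrable_I01_bounded[where B="K powr p"])
    show "(\<lambda>x. \<bar>f x\<bar> powr p) \<in> borel_measurable I01" using m by measurable
    fix x :: real assume "x \<in> {0<..<1}"
    then show "\<bar>\<bar>f x\<bar> powr p\<bar> \<le> K powr p" using b[of x] p by (auto intro: powr_mono2)
  qed
  then show ?thesis using m by (simp add: Lp_def)
qed

lemma Lp_cont_bounded:
  fixes f :: "real \<Rightarrow> real"
  assumes p: "0 \<le> p" and c: "continuous_on {0<..<1} f" and b: "\<And>x. x \<in> {0<..<1} \<Longrightarrow> \<bar>f x\<bar> \<le> K"
  shows "Lp p f"
  by (rule Lp_bounded[OF p _ b]) (rule continuous_imp_measurable_on_sets_lebesgue[OF c], simp)

section \<open>Test functions\<close>

lemma test_props:
  fixes \<phi> :: "real \<Rightarrow> real"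
  assumes "test_fun \<phi>"
  obtains a b where "0 < a" "a \<le> b" "b < 1" "\<And>x. x \<notin> {a..b} \<Longrightarrow> \<phi> x = 0"
    "\<And>x. x \<notin> {a..b} \<Longrightarrow> deriv \<phi> x = 0"
    "continuous_on UNIV \<phi>" "continuous_on UNIV (deriv \<phi>)"
    "\<And>x. (\<phi> has_real_derivative deriv \<phi> x) (at x)"
proof -
  from assms obtain a b where ab: "0 < a" "a \<le> b" "b < 1" and z: "\<And>x. x \<notin> {a..b} \<Longrightarrow> \<phi> x = 0"
    and sm: "\<And>n x. ((deriv ^^ n) \<phi>) differentiable (at x)"
    unfolding test_fun_def by blast
  have d0: "\<phi> differentiable (at x)" for x using sm[of 0 x] by simp
  have d1: "deriv \<phi> differentiable (at x)" for x using sm[of 1 x] by simp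
  have c0: "continuous_on UNIV \<phi>"
    using d0 by (simp add: continuous_at_imp_continuous_on differentiable_imp_continuous_within)
  have c1: "continuous_on UNIV (deriv \<phi>)"
    using d1 by (simp add: continuous_at_imp_continuous_on differentiable_imp_continuous_within)
  have dz: "deriv \<phi> x = 0" if x: "x \<notin> {a..b}" for x
  proof -
    have "((\<lambda>_. 0) has_real_derivative 0) (at x)" by simp
    moreover have "open (- {a..b})" by auto
    ultimately have "(\<phi> has_real_derivative 0) (at x)"
      by (rule has_field_derivative_transform_within_open[where S="- {a..b}"]) (use x z in auto)
    then show ?thesis by (rule DERIV_imp_deriv)
  qed
  show ?thesis using that[OF ab z dz c0 c1] d0 by (simp add: diff_deriv)
qed

lemma test_endpoints:
  fixes \<phi> :: "real \<Rightarrow> real"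
  assumes c: "continuous_on UNIV \<phi>" and z: "\<And>x. x \<notin> {a..b} \<Longrightarrow> \<phi> x = 0"
  shows "\<phi> a = 0" "\<phi> b = 0"
proof -
  have cl: "closed {x. \<phi> x = 0}" by (rule closed_Collect_eq[OF c continuous_on_const])
  have "{..<a} \<subseteq> {x. \<phi> x = 0}" using z by auto
  then have "closure {..<a} \<subseteq> {x. \<phi> x = 0}" using closure_minimal cl by blast
  then show "\<phi> a = 0" by auto
  have "{b<..} \<subseteq> {x. \<phi> x = 0}" using z by auto
  then have "closure {b<..} \<subseteq> {x. \<phi> x = 0}" using closure_minimal cl by blast
  then show "\<phi> b = 0" by auto
qed

lemma bounded_supp:
  fixes \<phi> :: "real \<Rightarrow> real"
  assumes c: "continuous_on UNIV \<phi>" and z: "\<And>x. x \<notin> {a..b} \<Longrightarrow> \<phi> x = 0"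
  obtains K where "K > 0" "\<And>x. \<bar>\<phi> x\<bar> \<le> K"
proof -
  have "compact (\<phi> ` {a..b})"
    by (rule compact_continuous_image[OF continuous_on_subset[OF c]]) auto
  then obtain K where K: "K > 0" "\<forall>y\<in>\<phi> ` {a..b}. norm y \<le> K"
    using compact_imp_bounded bounded_pos by metis
  have "\<bar>\<phi> x\<bar> \<le> K" for x using K z[of x] by (cases "x \<in> {a..b}") auto
  then show ?thesis using that K by auto
qed

lemma integrable_mult_test:
  fixes g \<phi> :: "real \<Rightarrow> real"
  assumes g: "integrable I01 g" and c: "continuous_on UNIV \<phi>" and b: "\<And>x. \<bar>\<phi> x\<bar> \<le> K"
  shows "integrable I01 (\<lambda>x. g x * \<phi> x)"
proof (rule Bochner_Integration.integrable_bound[where f="\<lambda>x. K * \<bar>g x\<bar>"])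
  show "integrable I01 (\<lambda>x. K * \<bar>g x\<bar>)" using g by auto
  have "\<phi> \<in> borel_measurable I01"
    by (rule continuous_imp_measurable_on_sets_lebesgue[OF continuous_on_subset[OF c]]) auto
  then show "(\<lambda>x. g x * \<phi> x) \<in> borel_measurable I01"
    using borel_measurable_integrable[OF g] by measurable
  show "AE x in I01. norm (g x * \<phi> x) \<le> norm (K * \<bar>g x\<bar>)"
  proof (rule AE_I2)
    fix x
    have "\<bar>g x\<bar> * \<bar>\<phi> x\<bar> \<le> \<bar>g x\<bar> * K" using b[of x] by (intro mult_left_mono) auto
    moreover have "0 \<le> K" using b[of x] by linarith
    ultimately show "norm (g x * \<phi> x) \<le> norm (K * \<bar>g x\<bar>)" by (simp add: abs_mult mult.commute)
  qed
qed

section \<open>Integration by parts against a test function\<close>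

lemma ibp_test:
  fixes u u' \<phi> :: "real \<Rightarrow> real"
  assumes du: "\<And>x. (u has_real_derivative u' x) (at x)" and cu': "continuous_on UNIV u'"
    and t: "test_fun \<phi>"
  shows "(LINT x|I01. u x * deriv \<phi> x) = - (LINT x|I01. u' x * \<phi> x)"
proof -
  obtain a b where ab: "0 < a" "a \<le> b" "b < 1" and z: "\<And>x. x \<notin> {a..b} \<Longrightarrow> \<phi> x = 0"
    and dz: "\<And>x. x \<notin> {a..b} \<Longrightarrow> deriv \<phi> x = 0"
    and c0: "continuous_on UNIV \<phi>" and c1: "continuous_on UNIV (deriv \<phi>)"
    and d: "\<And>x. (\<phi> has_real_derivative deriv \<phi> x) (at x)"
    using test_props[OF t] by blast
  have cu: "continuous_on UNIV u"
    using du by (meson DERIV_continuous continuous_at_imp_continuous_on)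
  have e1: "(LINT x|I01. u x * deriv \<phi> x) = integral {a..b} (\<lambda>x. u x * deriv \<phi> x)"
    by (rule LINT_supp(2)[OF _ ab]) (auto intro!: continuous_intros continuous_on_subset[OF cu] continuous_on_subset[OF c1] simp: dz)
  have e2: "(LINT x|I01. u' x * \<phi> x) = integral {a..b} (\<lambda>x. u' x * \<phi> x)"
    by (rule LINT_supp(2)[OF _ ab]) (auto intro!: continuous_intros continuous_on_subset[OF cu'] continuous_on_subset[OF c0] simp: z)
  have ftc: "((\<lambda>x. u' x * \<phi> x + u x * deriv \<phi> x) has_integral (u b * \<phi> b - u a * \<phi> a)) {a..b}"
  proof (rule fundamental_theorem_of_calculus[OF ab(2)])
    fix x
    have "((\<lambda>x. u x * \<phi> x) has_real_derivative u' x * \<phi> x + deriv \<phi> x * u x) (at x)"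
      by (rule DERIV_mult[OF du d])
    then show "((\<lambda>x. u x * \<phi> x) has_vector_derivative u' x * \<phi> x + u x * deriv \<phi> x) (at x within {a..b})"
      by (auto simp: has_real_derivative_iff_has_vector_derivative mult.commute intro: has_vector_derivative_at_within)
  qed
  have "u b * \<phi> b - u a * \<phi> a = 0" using test_endpoints[OF c0 z] by simp
  with ftc have "integral {a..b} (\<lambda>x. u' x * \<phi> x + u x * deriv \<phi> x) = 0" by (simp add: integral_unique)
  moreover have "integral {a..b} (\<lambda>x. u' x * \<phi> x + u x * deriv \<phi> x)
     = integral {a..b} (\<lambda>x. u' x * \<phi> x) + integral {a..b} (\<lambda>x. u x * deriv \<phi> x)"
    by (rule integral_add)
      (auto intro!: integrable_continuous_interval continuous_intros continuous_on_subset[OF cu]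
         continuous_on_subset[OF cu'] continuous_on_subset[OF c0] continuous_on_subset[OF c1])
  ultimately show ?thesis using e1 e2 by simp
qed


lemma d2_spec:
  assumes "W2p p w"
  shows "Lp p (d2 p w)" "weak_deriv (deriv w) (d2 p w)"
proof -
  from assms obtain g where "Lp p g \<and> weak_deriv (deriv w) g" by (auto simp: W2p_def)
  then have "Lp p (d2 p w) \<and> weak_deriv (deriv w) (d2 p w)"
    unfolding d2_def by (rule someI[where P="\<lambda>g. Lp p g \<and> weak_deriv (deriv w) g"])
  then show "Lp p (d2 p w)" "weak_deriv (deriv w) (d2 p w)" by auto
qed

lemma d2_unique:
  assumes p: "1 \<le> p" and w: "W2p p w" and G: "Lp p G" "weak_deriv (deriv w) G"
  shows "AE x in I01. d2 p w x = G x"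
proof (rule weak_unique)
  show "continuous_on {0<..<1} (deriv w)" using w by (simp add: W2p_def)
  show "integrable I01 (d2 p w)" by (rule Lp_integrable[OF p d2_spec(1)[OF w]])
  show "integrable I01 G" by (rule Lp_integrable[OF p G(1)])
  show "weak_deriv (deriv w) (d2 p w)" by (rule d2_spec(2)[OF w])
  show "weak_deriv (deriv w) G" by fact
qed

lemma ev_I01: "eventually (\<lambda>y. y \<in> {0<..<1::real}) (at_right 0)"
  by (auto simp: eventually_at_right_field intro!: exI[of _ 1])

lemma ev_I01': "eventually (\<lambda>y. y \<in> {0<..<1::real}) (at_left 1)"
  by (auto simp: eventually_at_left_field intro!: exI[of _ 0])

lemma pow_deriv: "((\<lambda>y. c * y ^ k) has_real_derivative c * real k * y ^ (k - 1)) (at y)"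
  by (auto intro!: derivative_eq_intros)

lemma perturb:
  fixes w :: "real \<Rightarrow> real"
  assumes p: "1 \<le> p" and w: "w \<in> Jprime p s" and k: "2 \<le> k"
  shows "(\<lambda>y. w y + c * y ^ k) \<in> Jprime p (s + c)"
    and "AE y in I01. d2 p (\<lambda>y. w y + c * y ^ k) y = d2 p w y + c * real k * real (k - 1) * y ^ (k - 2)"
proof -
  define v where "v y = w y + c * y ^ k" for y
  define u1 where "u1 y = c * real k * y ^ (k - 1)" for y
  define u2 where "u2 y = c * real k * real (k - 1) * y ^ (k - 2)" for y
  have W: "W2p p w" and wl0: "(w \<longlongrightarrow> -1) (at_right 0)" and wl1: "(w \<longlongrightarrow> s) (at_left 1)"
    and wd0: "(deriv w \<longlongrightarrow> 0) (at_right 0)"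
    using w by (auto simp: Jprime_def)
  have wdiff: "\<And>x. x \<in> {0<..<1} \<Longrightarrow> w differentiable (at x)"
    and wdc: "continuous_on {0<..<1} (deriv w)" and wLp: "Lp p w" and wdLp: "Lp p (deriv w)"
    using W by (auto simp: W2p_def)
  have g0: "Lp p (d2 p w)" "weak_deriv (deriv w) (d2 p w)" using d2_spec[OF W] by auto
  have du1: "(u1 has_real_derivative u2 x) (at x)" for x
  proof -
    have "(u1 has_real_derivative c * real k * (real (k - 1) * x ^ (k - 1 - 1))) (at x)"
      unfolding u1_def[abs_def] by (auto intro!: derivative_eq_intros)
    moreover have "k - 1 - 1 = k - 2" by simp
    ultimately show ?thesis by (simp add: u2_def mult.assoc)
  qed
  have cu1: "continuous_on UNIV u1" unfolding u1_def[abs_def] by (intro continuous_intros)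
  have cu2: "continuous_on UNIV u2" unfolding u2_def[abs_def] by (intro continuous_intros)
  have dv: "(v has_real_derivative deriv w x + u1 x) (at x)" if x: "x \<in> {0<..<1}" for x
    unfolding v_def[abs_def] u1_def
    by (intro DERIV_add diff_deriv wdiff x pow_deriv)
  have dveq: "deriv v x = deriv w x + u1 x" if "x \<in> {0<..<1}" for x
    using dv[OF that] by (rule DERIV_imp_deriv)
  have bnd: "\<bar>c * real m * real n * y ^ j\<bar> \<le> \<bar>c\<bar> * real m * real n" if "y \<in> {0<..<1}" for m n j y
  proof -
    have "\<bar>y ^ j\<bar> \<le> 1" using that by (auto simp: abs_mult power_le_one)
    then show ?thesis by (auto simp: abs_mult intro!: mult_left_le)
  qed
  have Lpz: "Lp p (\<lambda>y. c * y ^ k)"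
    by (rule Lp_cont_bounded[where K="\<bar>c\<bar>"]) (use p bnd[of _ 1 1 k] in \<open>auto intro!: continuous_intros\<close>)
  have Lpu1: "Lp p u1"
    by (rule Lp_cont_bounded[where K="\<bar>c\<bar> * real k * 1"]) (use p bnd[of _ k 1 "k-1"] in \<open>auto simp: u1_def intro!: continuous_intros\<close>)
  have Lpu2: "Lp p u2"
    by (rule Lp_cont_bounded[where K="\<bar>c\<bar> * real k * real (k - 1)"]) (use p bnd[of _ k "k - 1" "k-2"] in \<open>auto simp: u2_def intro!: continuous_intros\<close>)
  define G where "G y = d2 p w y + u2 y" for y
  have LpG: "Lp p G" unfolding G_def[abs_def] by (rule Lp_add[OF p g0(1) Lpu2])
  have cdv: "continuous_on {0<..<1} (deriv v)"
  proof -
    have "continuous_on {0<..<1} (\<lambda>x. deriv w x + u1 x)"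
      by (intro continuous_intros wdc continuous_on_subset[OF cu1]) auto
    then show ?thesis using continuous_on_cong[OF refl, of "{0<..<1}" "deriv v" "\<lambda>x. deriv w x + u1 x"] dveq by simp
  qed
  have wdG: "weak_deriv (deriv v) G"
    unfolding weak_deriv_def
  proof (intro allI impI)
    fix \<phi> :: "real \<Rightarrow> real" assume t: "test_fun \<phi>"
    obtain a b where ab: "0 < a" "a \<le> b" "b < 1" and z: "\<And>x. x \<notin> {a..b} \<Longrightarrow> \<phi> x = 0"
      and dz: "\<And>x. x \<notin> {a..b} \<Longrightarrow> deriv \<phi> x = 0"
      and c0: "continuous_on UNIV \<phi>" and c1: "continuous_on UNIV (deriv \<phi>)"
      and "\<And>x. (\<phi> has_real_derivative deriv \<phi> x) (at x)"
      using test_props[OF t] by blast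
    obtain K where K: "K > 0" "\<And>x. \<bar>\<phi> x\<bar> \<le> K" using bounded_supp[OF c0 z] by blast
    have i1: "integrable I01 (\<lambda>x. deriv w x * deriv \<phi> x)"
      by (rule integrable_I01_cont_supp[OF _ ab(1) ab(3)])
         (auto intro!: continuous_intros wdc continuous_on_subset[OF c1] simp: dz)
    have i2: "integrable I01 (\<lambda>x. u1 x * deriv \<phi> x)"
      by (rule integrable_I01_cont_supp[OF _ ab(1) ab(3)])
         (auto intro!: continuous_intros continuous_on_subset[OF cu1] continuous_on_subset[OF c1] simp: dz)
    have i3: "integrable I01 (\<lambda>x. d2 p w x * \<phi> x)"
      by (rule integrable_mult_test[OF Lp_integrable[OF p g0(1)] c0 K(2)])
    have i4: "integrable I01 (\<lambda>x. u2 x * \<phi> x)"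
      by (rule integrable_mult_test[OF Lp_integrable[OF p Lpu2] c0 K(2)])
    have "(LINT x|I01. deriv v x * deriv \<phi> x) = (LINT x|I01. deriv w x * deriv \<phi> x + u1 x * deriv \<phi> x)"
      by (rule Bochner_Integration.integral_cong) (auto simp: dveq algebra_simps)
    also have "\<dots> = (LINT x|I01. deriv w x * deriv \<phi> x) + (LINT x|I01. u1 x * deriv \<phi> x)"
      by (rule Bochner_Integration.integral_add[OF i1 i2])
    also have "(LINT x|I01. deriv w x * deriv \<phi> x) = - (LINT x|I01. d2 p w x * \<phi> x)"
      using g0(2) t by (auto simp: weak_deriv_def)
    also have "(LINT x|I01. u1 x * deriv \<phi> x) = - (LINT x|I01. u2 x * \<phi> x)"
      by (rule ibp_test[OF du1 cu2 t])
    also have "- (LINT x|I01. d2 p w x * \<phi> x) + - (LINT x|I01. u2 x * \<phi> x)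
        = - (LINT x|I01. d2 p w x * \<phi> x + u2 x * \<phi> x)"
      using Bochner_Integration.integral_add[OF i3 i4] by simp
    also have "(LINT x|I01. d2 p w x * \<phi> x + u2 x * \<phi> x) = (LINT x|I01. G x * \<phi> x)"
      by (simp add: G_def algebra_simps)
    finally show "(LINT x|I01. deriv v x * deriv \<phi> x) = - (LINT x|I01. G x * \<phi> x)" .
  qed
  have Wv: "W2p p v"
    unfolding W2p_def
  proof (intro conjI)
    show "\<forall>x\<in>{0<..<1}. v differentiable (at x)"
      using dv unfolding real_differentiable_def by blast
    show "continuous_on {0<..<1} (deriv v)" by (rule cdv)
    show "Lp p v" unfolding v_def[abs_def] by (rule Lp_add[OF p wLp Lpz])
    show "Lp p (deriv v)"
      by (rule Lp_cong[OF _ Lp_add[OF p wdLp Lpu1]]) (simp add: dveq)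
    show "\<exists>g. Lp p g \<and> weak_deriv (deriv v) g" using LpG wdG by blast
  qed
  have l0: "(v \<longlongrightarrow> -1) (at_right 0)"
  proof -
    have "((\<lambda>y. w y + c * y ^ k) \<longlongrightarrow> -1 + c * 0 ^ k) (at_right 0)"
      by (intro tendsto_intros wl0)
    moreover have "(0::real) ^ k = 0" using k by simp
    ultimately show ?thesis by (simp add: v_def[abs_def])
  qed
  have l1: "(v \<longlongrightarrow> s + c) (at_left 1)"
  proof -
    have "((\<lambda>y. w y + c * y ^ k) \<longlongrightarrow> s + c * 1 ^ k) (at_left 1)"
      by (intro tendsto_intros wl1)
    then show ?thesis by (simp add: v_def[abs_def])
  qed
  have ld: "(deriv v \<longlongrightarrow> 0) (at_right 0)"
  proof -
    have "((\<lambda>y. deriv w y + u1 y) \<longlongrightarrow> 0 + c * real k * 0 ^ (k - 1)) (at_right 0)"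
      unfolding u1_def by (intro tendsto_intros wd0)
    moreover have eq: "0 + c * real k * 0 ^ (k - 1) = (0::real)" using k by (cases "k - 1") auto
    ultimately have "((\<lambda>y. deriv w y + u1 y) \<longlongrightarrow> 0) (at_right 0)" by (simp only: eq)
    then show ?thesis
      by (rule Lim_transform_eventually) (use ev_I01 in \<open>eventually_elim, simp add: dveq\<close>)
  qed
  show "(\<lambda>y. w y + c * y ^ k) \<in> Jprime p (s + c)"
    using Wv l0 l1 ld by (simp add: Jprime_def v_def[abs_def])
  have "AE x in I01. d2 p v x = G x" by (rule d2_unique[OF p Wv LpG wdG])
  then show "AE y in I01. d2 p (\<lambda>y. w y + c * y ^ k) y = d2 p w y + c * real k * real (k - 1) * y ^ (k - 2)"
    by (simp add: v_def[abs_def] G_def u2_def)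
qed

lemma const_J:
  assumes p: "1 \<le> p"
  shows "(\<lambda>_. -1) \<in> Jprime p (-1)" "AE y in I01. d2 p (\<lambda>_. -1) y = 0"
proof -
  have dz: "deriv (\<lambda>_::real. -1::real) = (\<lambda>_. 0)" by (rule deriv_ext) simp
  have Lp0: "Lp p (\<lambda>_. 0)" by (rule Lp_cont_bounded[where K=0]) (use p in auto)
  have Lpm: "Lp p (\<lambda>_. -1)" by (rule Lp_cont_bounded[where K=1]) (use p in auto)
  have wd: "weak_deriv (deriv (\<lambda>_::real. -1::real)) (\<lambda>_. 0)"
    by (simp add: dz weak_deriv_def)
  have W: "W2p p (\<lambda>_. -1)"
    unfolding W2p_def using Lp0 Lpm wd by (auto simp: dz)
  show "(\<lambda>_. -1) \<in> Jprime p (-1)" using W by (simp add: Jprime_def dz)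
  show "AE y in I01. d2 p (\<lambda>_. -1) y = 0" by (rule d2_unique[OF p W Lp0 wd])
qed


definition EA :: "(real \<Rightarrow> real) \<Rightarrow> ennreal" where
  "EA w = (\<integral>\<^sup>+ y. ennreal (((w y)\<^sup>2 - 1)\<^sup>2) \<partial>I01)"

definition EB :: "real \<Rightarrow> (real \<Rightarrow> real) \<Rightarrow> ennreal" where
  "EB p w = (\<integral>\<^sup>+ y. ennreal ((d2 p w y)\<^sup>2) \<partial>I01)"

lemma Phi_EA_EB: "Phi p w = epow (EA w) (3/4) * epow (EB p w) (1/4)"
  by (simp add: Phi_def EA_def EB_def)

lemma emeasure_I01: "emeasure I01 {0<..<1} = 1"
  by (simp add: emeasure_restrict_space)

lemma nn_pow:
  fixes C :: real
  assumes C: "0 \<le> C"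
  shows "(\<integral>\<^sup>+ y. ennreal (C * y ^ m) \<partial>I01) = ennreal (C / real (Suc m))"
proof -
  have cont: "continuous_on {0<..<1} (\<lambda>y::real. C * y ^ m)" by (intro continuous_intros)
  have i: "integrable I01 (\<lambda>y. C * y ^ m)"
  proof (rule integrable_I01_bounded[where B=C])
    show "(\<lambda>y. C * y ^ m) \<in> borel_measurable I01"
      by (rule continuous_imp_measurable_on_sets_lebesgue[OF cont]) simp
    fix x :: real assume "x \<in> {0<..<1}"
    then show "\<bar>C * x ^ m\<bar> \<le> C" using C by (auto simp: abs_mult power_le_one intro!: mult_left_le)
  qed
  have ftc: "((\<lambda>y. C * y ^ m) has_integral (C * 1 ^ Suc m / real (Suc m) - C * 0 ^ Suc m / real (Suc m))) {0..1}"
  proof (rule fundamental_theorem_of_calculus)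
    fix x :: real
    have d: "((\<lambda>y. y ^ Suc m) has_real_derivative real (Suc m) * x ^ m) (at x)"
      using DERIV_pow[of "Suc m" x] by simp
    have "((\<lambda>y. C * y ^ Suc m / real (Suc m)) has_real_derivative C * (real (Suc m) * x ^ m) / real (Suc m)) (at x)"
      by (intro DERIV_cdivide DERIV_cmult d)
    then show "((\<lambda>y. C * y ^ Suc m / real (Suc m)) has_vector_derivative C * x ^ m) (at x within {0..1})"
      by (auto simp: has_real_derivative_iff_has_vector_derivative intro: has_vector_derivative_at_within)
  qed simp
  have "(LINT y|I01. C * y ^ m) = integral {0<..<1} (\<lambda>y. C * y ^ m)"
    by (rule lebesgue_integral_eq_integral[OF i]) simp
  also have "\<dots> = integral {0..1} (\<lambda>y. C * y ^ m)" by (simp add: integral_open_interval_real)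
  also have "\<dots> = C / real (Suc m)"
  proof -
    have "((\<lambda>y. C * y ^ m) has_integral C / real (Suc m)) {0..1}" using ftc by simp
    then show ?thesis by (rule integral_unique)
  qed
  finally have "(LINT y|I01. C * y ^ m) = C / real (Suc m)" .
  moreover have "0 \<le> C / real (Suc m)" using C by simp
  moreover have "(\<lambda>y. C * y ^ m) \<in> borel_measurable I01" using i by auto
  moreover have "AE x in I01. 0 \<le> C * x ^ m"
    by (rule AE_I') (auto simp: C intro!: mult_nonneg_nonneg)
  ultimately show ?thesis using nn_integral_eq_integrable[of "\<lambda>y. C * y ^ m" I01 "C / real (Suc m)"] i
    by simp
qed

lemma nn_lin2:
  fixes f1 f2 :: "real \<Rightarrow> real"
  assumes m: "f1 \<in> borel_measurable I01" "f2 \<in> borel_measurable I01"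
    and nn: "\<And>x. 0 \<le> f1 x" "\<And>x. 0 \<le> f2 x" and c: "0 \<le> c1" "0 \<le> c2"
  shows "(\<integral>\<^sup>+ x. ennreal (c1 * f1 x + c2 * f2 x) \<partial>I01)
     = ennreal c1 * (\<integral>\<^sup>+ x. ennreal (f1 x) \<partial>I01) + ennreal c2 * (\<integral>\<^sup>+ x. ennreal (f2 x) \<partial>I01)"
proof -
  have "(\<lambda>x. ennreal (c1 * f1 x + c2 * f2 x)) = (\<lambda>x. ennreal c1 * ennreal (f1 x) + ennreal c2 * ennreal (f2 x))"
    using nn c by (auto simp: ennreal_plus ennreal_mult)
  moreover have "(\<integral>\<^sup>+ x. ennreal c1 * ennreal (f1 x) + ennreal c2 * ennreal (f2 x) \<partial>I01)
      = (\<integral>\<^sup>+ x. ennreal c1 * ennreal (f1 x) \<partial>I01) + (\<integral>\<^sup>+ x. ennreal c2 * ennreal (f2 x) \<partial>I01)"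
    by (rule nn_integral_add) (use m in auto)
  moreover have "(\<integral>\<^sup>+ x. ennreal c1 * ennreal (f1 x) \<partial>I01) = ennreal c1 * (\<integral>\<^sup>+ x. ennreal (f1 x) \<partial>I01)"
    by (rule nn_integral_cmult) (use m in auto)
  moreover have "(\<integral>\<^sup>+ x. ennreal c2 * ennreal (f2 x) \<partial>I01) = ennreal c2 * (\<integral>\<^sup>+ x. ennreal (f2 x) \<partial>I01)"
    by (rule nn_integral_cmult) (use m in auto)
  ultimately show ?thesis by simp
qed

lemma sq_split:
  fixes u v \<tau> :: real
  assumes "0 < \<tau>"
  shows "(u + v)\<^sup>2 \<le> (1 + \<tau>) * u\<^sup>2 + (1 + 1 / \<tau>) * v\<^sup>2"
proof -
  have "0 \<le> (\<tau> * u - v)\<^sup>2 / \<tau>" using assms by simp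
  also have "(\<tau> * u - v)\<^sup>2 / \<tau> = \<tau> * u\<^sup>2 - 2 * u * v + v\<^sup>2 / \<tau>"
    using assms by (simp add: field_simps power2_eq_square)
  finally show ?thesis using assms by (simp add: field_simps power2_eq_square)
qed

lemma D_bound:
  fixes w z \<mu> :: real
  assumes \<mu>: "0 < \<mu>"
  shows "(2 * w * z + z\<^sup>2)\<^sup>2 \<le> 4 * (w\<^sup>2 - 1)\<^sup>2 / \<mu> + (4 * \<mu> + 2) * z ^ 4 + 8 * z\<^sup>2"
proof -
  define F where "F = w\<^sup>2 - 1"
  have s1: "(2 * w * z + z\<^sup>2)\<^sup>2 \<le> 8 * w\<^sup>2 * z\<^sup>2 + 2 * z ^ 4"
  proof -
    have "0 \<le> (2 * w * z - z\<^sup>2)\<^sup>2" by simp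
    then show ?thesis by (simp add: power2_eq_square algebra_simps power4_eq_xxxx)
  qed
  have s2: "w\<^sup>2 * z\<^sup>2 \<le> \<bar>F\<bar> * z\<^sup>2 + z\<^sup>2"
  proof -
    have "w\<^sup>2 \<le> \<bar>F\<bar> + 1" by (simp add: F_def)
    then have "w\<^sup>2 * z\<^sup>2 \<le> (\<bar>F\<bar> + 1) * z\<^sup>2" by (intro mult_right_mono) auto
    then show ?thesis by (simp add: algebra_simps)
  qed
  have s3: "2 * \<bar>F\<bar> * z\<^sup>2 \<le> F\<^sup>2 / \<mu> + \<mu> * z ^ 4"
  proof -
    have "0 \<le> (\<bar>F\<bar> - \<mu> * z\<^sup>2)\<^sup>2 / \<mu>" using \<mu> by simp
    also have "(\<bar>F\<bar> - \<mu> * z\<^sup>2)\<^sup>2 / \<mu> = F\<^sup>2 / \<mu> - 2 * \<bar>F\<bar> * z\<^sup>2 + \<mu> * z ^ 4"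
      using \<mu> by (simp add: field_simps power2_eq_square power4_eq_xxxx)
    finally show ?thesis by simp
  qed
  have e: "4 * (w\<^sup>2 - 1)\<^sup>2 / \<mu> + (4 * \<mu> + 2) * z ^ 4 + 8 * z\<^sup>2
      = 4 * (F\<^sup>2 / \<mu>) + 4 * (\<mu> * z ^ 4) + 2 * z ^ 4 + 8 * z\<^sup>2"
    by (simp add: F_def algebra_simps)
  have e2: "8 * w\<^sup>2 * z\<^sup>2 = 8 * (w\<^sup>2 * z\<^sup>2)" "2 * \<bar>F\<bar> * z\<^sup>2 = 2 * (\<bar>F\<bar> * z\<^sup>2)" by simp_all
  show ?thesis unfolding e using s1 s2 s3 e2 by linarith
qed

lemma amgm_basic:
  fixes x y :: real
  assumes "0 \<le> x" "0 \<le> y"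
  shows "x powr (3/4) * y powr (1/4) \<le> (3 * x + y) / 4"
proof (cases "x = 0 \<or> y = 0")
  case True then show ?thesis using assms by auto
next
  case False
  then have x: "0 < x" and y: "0 < y" using assms by auto
  define r where "r = (y / x) powr (1/4)"
  have r: "0 < r" using x y by (simp add: r_def)
  have r4: "r ^ 4 = y / x"
  proof -
    have "r ^ 4 = r powr (4::real)" using r by simp
    also have "\<dots> = (y / x) powr ((1/4) * 4)" by (simp add: r_def powr_powr)
    finally show ?thesis using x y by simp
  qed
  have yx: "y = x * r ^ 4" using r4 x by (simp add: field_simps)
  have "x powr (3/4) * y powr (1/4) = x powr (3/4) * (x powr (1/4) * (r ^ 4) powr (1/4))"
    using x r by (simp add: yx powr_mult)
  also have "(r ^ 4) powr (1/4) = r"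
  proof -
    have "r ^ 4 = r powr (4::real)" using r by simp
    then have "(r ^ 4) powr (1/4) = r powr (4 * (1/4))" by (simp add: powr_powr)
    then show ?thesis using r by simp
  qed
  also have "x powr (3/4) * (x powr (1/4) * r) = x * r"
    using x by (simp add: powr_add[symmetric] mult.assoc[symmetric])
  finally have e: "x powr (3/4) * y powr (1/4) = x * r" .
  have "0 \<le> x * ((r - 1)\<^sup>2 * (r\<^sup>2 + 2 * r + 3))" using x r by (intro mult_nonneg_nonneg) auto
  then have "x * r \<le> (3 * x + x * r ^ 4) / 4"
    by (simp add: algebra_simps power2_eq_square power4_eq_xxxx)
  then show ?thesis using e yx by simp
qed

lemma amgm:
  fixes a b \<theta> :: real
  assumes "0 \<le> a" "0 \<le> b" "0 < \<theta>"
  shows "a powr (3/4) * b powr (1/4) \<le> (3 * \<theta> * a + b / \<theta> ^ 3) / 4"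
proof -
  have "(\<theta> * a) powr (3/4) * (b / \<theta> ^ 3) powr (1/4) \<le> (3 * (\<theta> * a) + b / \<theta> ^ 3) / 4"
    using assms by (intro amgm_basic) auto
  moreover have "(\<theta> * a) powr (3/4) * (b / \<theta> ^ 3) powr (1/4) = a powr (3/4) * b powr (1/4)"
  proof -
    have "(\<theta> ^ 3) powr (1/4) = \<theta> powr (3/4)"
    proof -
      have "\<theta> ^ 3 = \<theta> powr (3::real)" using assms by simp
      then have "(\<theta> ^ 3) powr (1/4) = \<theta> powr (3 * (1/4))" by (simp add: powr_powr)
      then show ?thesis by simp
    qed
    then show ?thesis using assms
      by (simp add: powr_mult powr_divide)
  qed
  ultimately show ?thesis by (simp add: mult.assoc)
qed

lemma epow_ennreal: "0 \<le> a \<Longrightarrow> epow (ennreal a) r = ennreal (a powr r)"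
  by (simp add: epow_def)

lemma Phi_fin:
  assumes "EA w = ennreal a" "EB p w = ennreal b" "0 \<le> a" "0 \<le> b"
  shows "Phi p w = ennreal (a powr (3/4) * b powr (1/4))"
  using assms by (simp add: Phi_EA_EB epow_ennreal ennreal_mult)

lemma ennreal_le_obtain:
  fixes x :: ennreal
  assumes "x \<le> ennreal r"
  obtains q where "x = ennreal q" "0 \<le> q" "q \<le> max 0 r"
proof -
  have "x \<noteq> \<infinity>" using assms by (auto simp: top_unique)
  then obtain q where q: "x = ennreal q" "0 \<le> q" by (cases x) auto
  then have "q \<le> max 0 r" using assms
    by (cases "0 \<le> r") (auto simp: ennreal_le_iff2 ennreal_neg)
  then show ?thesis using q that by blast
qed

lemma Phi_le:
  assumes A: "EA w \<le> ennreal A1" and B: "EB p w \<le> ennreal B1" and nn: "0 \<le> A1" "0 \<le> B1" and t: "0 < \<theta>"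
  shows "Phi p w \<le> ennreal ((3 * \<theta> * A1 + B1 / \<theta> ^ 3) / 4)"
proof -
  obtain a where a: "EA w = ennreal a" "0 \<le> a" "a \<le> A1" using ennreal_le_obtain[OF A] nn by auto
  obtain b where b: "EB p w = ennreal b" "0 \<le> b" "b \<le> B1" using ennreal_le_obtain[OF B] nn by auto
  have "a powr (3/4) * b powr (1/4) \<le> A1 powr (3/4) * B1 powr (1/4)"
    using a b by (intro mult_mono powr_mono2) auto
  also have "\<dots> \<le> (3 * \<theta> * A1 + B1 / \<theta> ^ 3) / 4" by (rule amgm[OF nn t])
  finally show ?thesis using Phi_fin[OF a(1) b(1) a(2) b(2)] by (simp add: ennreal_leI)
qed


lemma polym: "(\<lambda>x::real. C * x ^ m) \<in> borel_measurable I01"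
  by (rule continuous_imp_measurable_on_sets_lebesgue) (auto intro!: continuous_intros)

lemma ennreal_lin:
  assumes "0 \<le> \<alpha>" "0 \<le> x" "0 \<le> \<beta>" "0 \<le> y"
  shows "ennreal \<alpha> * ennreal x + ennreal \<beta> * ennreal y = ennreal (\<alpha> * x + \<beta> * y)"
proof -
  have "ennreal (\<alpha> * x + \<beta> * y) = ennreal (\<alpha> * x) + ennreal (\<beta> * y)"
    by (rule ennreal_plus) (use assms in auto)
  also have "\<dots> = ennreal \<alpha> * ennreal x + ennreal \<beta> * ennreal y"
    by (simp only: ennreal_mult[OF assms(1,2)] ennreal_mult[OF assms(3,4)])
  finally show ?thesis by simp
qed

lemma KL:
  fixes w :: "real \<Rightarrow> real" and c \<tau> \<mu> \<theta> a b :: real and k :: nat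
  assumes p: "1 \<le> p" and w: "w \<in> Jprime p s" and k: "2 \<le> k"
    and A: "EA w = ennreal a" and B: "EB p w = ennreal b" and a: "0 \<le> a" and b: "0 \<le> b"
    and \<tau>: "0 < \<tau>" and \<mu>: "0 < \<mu>" and \<theta>: "0 < \<theta>"
  defines "A1 \<equiv> (1 + \<tau>) * a + (1 + 1/\<tau>) * (4 * a / \<mu> + (4 * \<mu> + 2) * (c ^ 4 / real (Suc (4 * k))) + 8 * (c\<^sup>2 / real (Suc (2 * k))))"
    and "B1 \<equiv> (1 + \<tau>) * b + (1 + 1/\<tau>) * ((c * real k * real (k - 1))\<^sup>2 / real (Suc (2 * k - 4)))"
  shows "(\<lambda>y. w y + c * y ^ k) \<in> Jprime p (s + c)"
    and "Phi p (\<lambda>y. w y + c * y ^ k) \<le> ennreal ((3 * \<theta> * A1 + B1 / \<theta> ^ 3) / 4)"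
proof -
  define v where "v y = w y + c * y ^ k" for y
  define u2 where "u2 y = c * real k * real (k - 1) * y ^ (k - 2)" for y
  show J: "(\<lambda>y. w y + c * y ^ k) \<in> Jprime p (s + c)" by (rule perturb(1)[OF p w k])
  have AE: "AE y in I01. d2 p v y = d2 p w y + u2 y"
    using perturb(2)[OF p w k, of c] by (simp add: v_def[abs_def] u2_def)
  have W: "W2p p w" using w by (simp add: Jprime_def)
  have wm: "w \<in> borel_measurable I01" using W by (simp add: W2p_def Lp_def)
  have gm: "d2 p w \<in> borel_measurable I01" using d2_spec(1)[OF W] by (simp add: Lp_def)
  have t1: "0 \<le> 1 + \<tau>" "0 \<le> 1 + 1/\<tau>" using \<tau> by auto
  have cu2: "continuous_on UNIV u2" unfolding u2_def[abs_def] by (intro continuous_intros)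
  have u2m: "u2 \<in> borel_measurable I01"
    by (rule continuous_imp_measurable_on_sets_lebesgue[OF continuous_on_subset[OF cu2]]) auto
  have "EB p v = (\<integral>\<^sup>+ y. ennreal ((d2 p w y + u2 y)\<^sup>2) \<partial>I01)"
    unfolding EB_def by (rule nn_integral_cong_AE) (use AE in \<open>eventually_elim, simp\<close>)
  also have "\<dots> \<le> (\<integral>\<^sup>+ y. ennreal ((1 + \<tau>) * (d2 p w y)\<^sup>2 + (1 + 1/\<tau>) * (u2 y)\<^sup>2) \<partial>I01)"
    by (intro nn_integral_mono ennreal_leI sq_split \<tau>)
  also have "\<dots> = ennreal (1 + \<tau>) * (\<integral>\<^sup>+ y. ennreal ((d2 p w y)\<^sup>2) \<partial>I01) + ennreal (1 + 1/\<tau>) * (\<integral>\<^sup>+ y. ennreal ((u2 y)\<^sup>2) \<partial>I01)"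
    by (rule nn_lin2) (use gm u2m t1 in auto)
  also have "(\<integral>\<^sup>+ y. ennreal ((u2 y)\<^sup>2) \<partial>I01) = (\<integral>\<^sup>+ y. ennreal ((c * real k * real (k - 1))\<^sup>2 * y ^ (2 * k - 4)) \<partial>I01)"
  proof -
    have "(u2 y)\<^sup>2 = (c * real k * real (k - 1))\<^sup>2 * y ^ (2 * k - 4)" for y
    proof -
      have "(y ^ (k - 2))\<^sup>2 = y ^ (2 * k - 4)" using k by (simp add: power_mult[symmetric] algebra_simps)
      then show ?thesis by (simp add: u2_def power_mult_distrib)
    qed
    then show ?thesis by simp
  qed
  also have "\<dots> = ennreal ((c * real k * real (k - 1))\<^sup>2 / real (Suc (2 * k - 4)))"
    by (rule nn_pow) simp
  finally have h: "EB p v \<le> ennreal (1 + \<tau>) * EB p w + ennreal (1 + 1/\<tau>) * ennreal ((c * real k * real (k - 1))\<^sup>2 / real (Suc (2 * k - 4)))"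
    by (simp add: EB_def)
  have EBv: "EB p v \<le> ennreal B1"
  proof -
    let ?Q = "(c * real k * real (k - 1))\<^sup>2 / real (Suc (2 * k - 4))"
    have q: "0 \<le> ?Q" by simp
    have "ennreal B1 = ennreal ((1 + \<tau>) * b) + ennreal ((1 + 1/\<tau>) * ?Q)"
      unfolding B1_def by (rule ennreal_plus) (use b t1 q in auto)
    also have "\<dots> = ennreal (1 + \<tau>) * ennreal b + ennreal (1 + 1/\<tau>) * ennreal ?Q"
      by (simp only: ennreal_mult[OF t1(1) b] ennreal_mult[OF t1(2) q])
    finally show ?thesis using h B by simp
  qed
  define F where "F y = ((w y)\<^sup>2 - 1)\<^sup>2" for y
  define R where "R y = (4 * \<mu> + 2) * (c ^ 4 * y ^ (4 * k)) + 8 * (c\<^sup>2 * y ^ (2 * k))" for y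
  have pw: "((v y)\<^sup>2 - 1)\<^sup>2 \<le> (1 + \<tau> + (1 + 1/\<tau>) * (4 / \<mu>)) * F y + (1 + 1/\<tau>) * R y" for y
  proof -
    let ?z = "c * y ^ k"
    have "(v y)\<^sup>2 - 1 = ((w y)\<^sup>2 - 1) + (2 * w y * ?z + ?z\<^sup>2)"
      by (simp add: v_def power2_eq_square algebra_simps)
    then have "((v y)\<^sup>2 - 1)\<^sup>2 = (((w y)\<^sup>2 - 1) + (2 * w y * ?z + ?z\<^sup>2))\<^sup>2" by (simp only:)
    then have "((v y)\<^sup>2 - 1)\<^sup>2 \<le> (1 + \<tau>) * ((w y)\<^sup>2 - 1)\<^sup>2 + (1 + 1/\<tau>) * (2 * w y * ?z + ?z\<^sup>2)\<^sup>2"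
      using sq_split[OF \<tau>, of "(w y)\<^sup>2 - 1" "2 * w y * ?z + ?z\<^sup>2"] by (simp only:)
    also have "(2 * w y * ?z + ?z\<^sup>2)\<^sup>2 \<le> 4 * ((w y)\<^sup>2 - 1)\<^sup>2 / \<mu> + (4 * \<mu> + 2) * ?z ^ 4 + 8 * ?z\<^sup>2"
      by (rule D_bound[OF \<mu>])
    also have "4 * ((w y)\<^sup>2 - 1)\<^sup>2 / \<mu> + (4 * \<mu> + 2) * ?z ^ 4 + 8 * ?z\<^sup>2 = (4 / \<mu>) * F y + R y"
      by (simp add: F_def R_def power_mult_distrib power_mult[symmetric] mult.commute)
    finally have "((v y)\<^sup>2 - 1)\<^sup>2 \<le> (1 + \<tau>) * F y + (1 + 1/\<tau>) * ((4 / \<mu>) * F y + R y)"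
      using t1 by (simp add: mult_left_mono F_def)
    then show ?thesis by (simp add: algebra_simps)
  qed
  have Fm: "F \<in> borel_measurable I01" unfolding F_def[abs_def] using wm by measurable
  have Rm: "R \<in> borel_measurable I01"
    by (rule continuous_imp_measurable_on_sets_lebesgue) (auto simp: R_def[abs_def] intro!: continuous_intros)
  have Rnn: "0 \<le> R y" for y
  proof -
    have "0 \<le> y ^ (4 * k)" "0 \<le> y ^ (2 * k)" by (simp_all add: power_mult zero_le_power2 power_even_eq)
    then show ?thesis using \<mu> by (auto simp: R_def intro!: add_nonneg_nonneg mult_nonneg_nonneg)
  qed
  have "EA v \<le> (\<integral>\<^sup>+ y. ennreal ((1 + \<tau> + (1 + 1/\<tau>) * (4 / \<mu>)) * F y + (1 + 1/\<tau>) * R y) \<partial>I01)"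
    unfolding EA_def by (intro nn_integral_mono ennreal_leI pw)
  also have "\<dots> = ennreal (1 + \<tau> + (1 + 1/\<tau>) * (4 / \<mu>)) * (\<integral>\<^sup>+ y. ennreal (F y) \<partial>I01) + ennreal (1 + 1/\<tau>) * (\<integral>\<^sup>+ y. ennreal (R y) \<partial>I01)"
    by (rule nn_lin2) (use Fm Rm Rnn t1 \<tau> \<mu> in \<open>auto simp: F_def[symmetric]\<close>, simp add: F_def)
  also have "(\<integral>\<^sup>+ y. ennreal (R y) \<partial>I01) = ennreal (4 * \<mu> + 2) * (\<integral>\<^sup>+ y. ennreal (c ^ 4 * y ^ (4 * k)) \<partial>I01) + ennreal 8 * (\<integral>\<^sup>+ y. ennreal (c\<^sup>2 * y ^ (2 * k)) \<partial>I01)"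
    unfolding R_def
    by (rule nn_lin2[OF polym polym]) (use \<mu> in \<open>auto simp: power_mult zero_le_power2 power_even_eq intro!: mult_nonneg_nonneg\<close>)
  also have "(\<integral>\<^sup>+ y. ennreal (c ^ 4 * y ^ (4 * k)) \<partial>I01) = ennreal (c ^ 4 / real (Suc (4 * k)))"
    by (rule nn_pow) (simp add: zero_le_even_power)
  also have "(\<integral>\<^sup>+ y. ennreal (c\<^sup>2 * y ^ (2 * k)) \<partial>I01) = ennreal (c\<^sup>2 / real (Suc (2 * k)))"
    by (rule nn_pow) simp
  also have "(\<integral>\<^sup>+ y. ennreal (F y) \<partial>I01) = ennreal a" using A by (simp add: EA_def F_def[abs_def])
  finally have EAv: "EA v \<le> ennreal A1"
  proof -
    assume h: "EA v \<le> ennreal (1 + \<tau> + (1 + 1 / \<tau>) * (4 / \<mu>)) * ennreal a +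
      ennreal (1 + 1 / \<tau>) * (ennreal (4 * \<mu> + 2) * ennreal (c ^ 4 / real (Suc (4 * k))) + ennreal 8 * ennreal (c\<^sup>2 / real (Suc (2 * k))))"
    have nn: "0 \<le> 1 + \<tau> + (1 + 1 / \<tau>) * (4 / \<mu>)" "0 \<le> 4 * \<mu> + 2" "0 \<le> c ^ 4 / real (Suc (4 * k))"
      "0 \<le> c\<^sup>2 / real (Suc (2 * k))"
      using \<tau> \<mu> by (auto simp: zero_le_even_power)
    have "ennreal (4 * \<mu> + 2) * ennreal (c ^ 4 / real (Suc (4 * k))) + ennreal 8 * ennreal (c\<^sup>2 / real (Suc (2 * k)))
       = ennreal ((4 * \<mu> + 2) * (c ^ 4 / real (Suc (4 * k))) + 8 * (c\<^sup>2 / real (Suc (2 * k))))"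
      by (rule ennreal_lin) (use nn in auto)
    moreover have "ennreal (1 + \<tau> + (1 + 1 / \<tau>) * (4 / \<mu>)) * ennreal a + ennreal (1 + 1 / \<tau>) *
       ennreal ((4 * \<mu> + 2) * (c ^ 4 / real (Suc (4 * k))) + 8 * (c\<^sup>2 / real (Suc (2 * k))))
      = ennreal ((1 + \<tau> + (1 + 1 / \<tau>) * (4 / \<mu>)) * a +
      (1 + 1 / \<tau>) * ((4 * \<mu> + 2) * (c ^ 4 / real (Suc (4 * k))) + 8 * (c\<^sup>2 / real (Suc (2 * k)))))"
      by (rule ennreal_lin) (use nn a t1 in auto)
    moreover have "(1 + \<tau> + (1 + 1 / \<tau>) * (4 / \<mu>)) * a +
      (1 + 1 / \<tau>) * ((4 * \<mu> + 2) * (c ^ 4 / real (Suc (4 * k))) + 8 * (c\<^sup>2 / real (Suc (2 * k)))) = A1"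
      by (simp add: A1_def algebra_simps)
    ultimately have "ennreal (1 + \<tau> + (1 + 1 / \<tau>) * (4 / \<mu>)) * ennreal a +
      ennreal (1 + 1 / \<tau>) * (ennreal (4 * \<mu> + 2) * ennreal (c ^ 4 / real (Suc (4 * k))) + ennreal 8 * ennreal (c\<^sup>2 / real (Suc (2 * k))))
      = ennreal A1" by simp
    then show ?thesis using h by simp
  qed
  have A1nn: "0 \<le> A1" "0 \<le> B1" using a b \<tau> \<mu> by (auto simp: A1_def B1_def zero_le_even_power intro!: add_nonneg_nonneg mult_nonneg_nonneg)
  show "Phi p (\<lambda>y. w y + c * y ^ k) \<le> ennreal ((3 * \<theta> * A1 + B1 / \<theta> ^ 3) / 4)"
    using Phi_le[OF EAv EBv A1nn \<theta>] by (simp add: v_def[abs_def])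
qed


lemma J_basic:
  assumes w: "w \<in> Jprime p s"
  shows "continuous_on {0<..<1} w" "(w \<longlongrightarrow> -1) (at_right 0)" "(w \<longlongrightarrow> s) (at_left 1)"
    "w \<in> borel_measurable I01" "W2p p w" "(deriv w \<longlongrightarrow> 0) (at_right 0)"
    "\<And>x. x \<in> {0<..<1} \<Longrightarrow> (w has_real_derivative deriv w x) (at x)"
    "continuous_on {0<..<1} (deriv w)"
proof -
  show W: "W2p p w" using w by (simp add: Jprime_def)
  have d: "\<forall>x\<in>{0<..<1}. w differentiable (at x)" using W by (simp add: W2p_def)
  then show "continuous_on {0<..<1} w"
    by (meson continuous_at_imp_continuous_on differentiable_imp_continuous_within)
  show "(w \<longlongrightarrow> -1) (at_right 0)" "(w \<longlongrightarrow> s) (at_left 1)" "(deriv w \<longlongrightarrow> 0) (at_right 0)"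
    using w by (auto simp: Jprime_def)
  show "w \<in> borel_measurable I01" using W by (simp add: W2p_def Lp_def)
  show "\<And>x. x \<in> {0<..<1} \<Longrightarrow> (w has_real_derivative deriv w x) (at x)"
    using d by (auto intro: diff_deriv)
  show "continuous_on {0<..<1} (deriv w)" using W by (simp add: W2p_def)
qed

lemma near0:
  fixes w :: "real \<Rightarrow> real"
  assumes "(w \<longlongrightarrow> l) (at_right 0)" "0 < r"
  obtains b where "0 < b" "\<And>y. 0 < y \<Longrightarrow> y < b \<Longrightarrow> \<bar>w y - l\<bar> < r"
proof -
  have "eventually (\<lambda>y. dist (w y) l < r) (at_right 0)" using assms tendstoD by blast
  then obtain b where "b > 0" "\<forall>y>0. y < b \<longrightarrow> dist (w y) l < r"
    by (auto simp: eventually_at_right_field)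
  then show ?thesis using that by (auto simp: dist_real_def)
qed

lemma near1:
  fixes w :: "real \<Rightarrow> real"
  assumes "(w \<longlongrightarrow> l) (at_left 1)" "0 < r"
  obtains b where "b < 1" "\<And>y. b < y \<Longrightarrow> y < 1 \<Longrightarrow> \<bar>w y - l\<bar> < r"
proof -
  have "eventually (\<lambda>y. dist (w y) l < r) (at_left 1)" using assms tendstoD by blast
  then obtain b where "b < 1" "\<forall>y>b. y < 1 \<longrightarrow> dist (w y) l < r"
    by (auto simp: eventually_at_left_field)
  then show ?thesis using that by (auto simp: dist_real_def)
qed

lemma w_bounded:
  assumes w: "w \<in> Jprime p s"
  obtains K where "\<And>y. y \<in> {0<..<1} \<Longrightarrow> \<bar>w y\<bar> \<le> K"
proof -
  note J = J_basic[OF w]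
  obtain b0 where b0: "0 < b0" "\<And>y. 0 < y \<Longrightarrow> y < b0 \<Longrightarrow> \<bar>w y - -1\<bar> < 1"
    using near0[OF J(2) zero_less_one] by blast
  obtain b1 where b1: "b1 < 1" "\<And>y. b1 < y \<Longrightarrow> y < 1 \<Longrightarrow> \<bar>w y - s\<bar> < 1"
    using near1[OF J(3) zero_less_one] by blast
  define \<alpha> where "\<alpha> = min (b0/2) (1/2)"
  define \<beta> where "\<beta> = max ((b1+1)/2) (1/2)"
  have h1: "b1 < (b1 + 1) / 2" "(b1 + 1) / 2 < 1" using b1 by auto
  have ab: "0 < \<alpha>" "\<alpha> < b0" "\<alpha> \<le> \<beta>" "b1 < \<beta>" "\<beta> < 1"
    using b0 h1 unfolding \<alpha>_def \<beta>_def by (auto simp: min_def max_def)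
  have "compact (w ` {\<alpha>..\<beta>})"
    by (rule compact_continuous_image[OF continuous_on_subset[OF J(1)]]) (use ab in auto)
  then obtain K0 where K0: "\<forall>y\<in>w ` {\<alpha>..\<beta>}. norm y \<le> K0"
    using compact_imp_bounded bounded_pos by metis
  have "\<bar>w y\<bar> \<le> max K0 (max 2 (\<bar>s\<bar> + 1))" if y: "y \<in> {0<..<1}" for y
  proof (cases "y < \<alpha>")
    case True then have "\<bar>w y - -1\<bar> < 1" using b0(2)[of y] y ab by auto
    then show ?thesis by auto
  next
    case False
    show ?thesis
    proof (cases "\<beta> < y")
      case True then have "\<bar>w y - s\<bar> < 1" using b1(2)[of y] y ab by auto
      then show ?thesis by auto
    next
      case False
      then have "y \<in> {\<alpha>..\<beta>}" using \<open>\<not> y < \<alpha>\<close> by auto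
      then have "\<bar>w y\<bar> \<le> K0" using K0 by auto
      then show ?thesis by (simp add: le_max_iff_disj)
    qed
  qed
  then show ?thesis using that by blast
qed

lemma EA_fin:
  assumes w: "w \<in> Jprime p s"
  shows "EA w < \<infinity>"
proof -
  obtain K where K: "\<And>y. y \<in> {0<..<1} \<Longrightarrow> \<bar>w y\<bar> \<le> K" using w_bounded[OF w] by blast
  have "EA w \<le> (\<integral>\<^sup>+ y. ennreal ((K\<^sup>2 + 1)\<^sup>2) \<partial>I01)"
    unfolding EA_def
  proof (rule nn_integral_mono)
    fix y assume "y \<in> space I01"
    then have y: "y \<in> {0<..<1}" by simp
    have "\<bar>(w y)\<^sup>2 - 1\<bar> \<le> (w y)\<^sup>2 + 1"
      using zero_le_power2[of "w y"] unfolding abs_le_iff by linarith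
    also have "(w y)\<^sup>2 \<le> K\<^sup>2"
      using K[OF y] by (metis abs_le_square_iff abs_of_nonneg abs_ge_zero order_trans)
    finally have "\<bar>(w y)\<^sup>2 - 1\<bar> \<le> K\<^sup>2 + 1" by simp
    then have "((w y)\<^sup>2 - 1)\<^sup>2 \<le> (K\<^sup>2 + 1)\<^sup>2"
      by (metis abs_le_square_iff abs_of_nonneg abs_ge_zero order_trans power2_abs)
    then show "ennreal (((w y)\<^sup>2 - 1)\<^sup>2) \<le> ennreal ((K\<^sup>2 + 1)\<^sup>2)" by (rule ennreal_leI)
  qed
  also have "\<dots> = ennreal ((K\<^sup>2 + 1)\<^sup>2) * emeasure I01 {0<..<1}" by simp
  also have "\<dots> < \<infinity>" by (simp add: emeasure_I01)
  finally show ?thesis .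
qed

lemma EA_zero:
  assumes w: "w \<in> Jprime p s" and z: "EA w = 0"
  shows "s = -1"
proof -
  note J = J_basic[OF w]
  define F where "F y = ((w y)\<^sup>2 - 1)\<^sup>2" for y
  have Fm: "(\<lambda>y. ennreal (F y)) \<in> borel_measurable I01" unfolding F_def using J(4) by measurable
  have "AE y in I01. ennreal (F y) = 0"
    using z nn_integral_0_iff_AE[OF Fm] by (simp add: EA_def F_def)
  then have "AE y in I01. F y = 0"
    by eventually_elim (auto simp: F_def)
  then have ae: "AE y in lebesgue. y \<in> {0<..<1} \<longrightarrow> F y = 0"
    by (subst (asm) AE_restrict_space_iff) auto
  have Fc: "continuous_on {0<..<1} F" unfolding F_def[abs_def] by (intro continuous_intros J(1))
  have sq: "(w y)\<^sup>2 = 1" if y: "y \<in> {0<..<1}" for y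
  proof (rule ccontr)
    assume ne: "(w y)\<^sup>2 \<noteq> 1"
    define S where "S = {0<..<1} \<inter> F -` (- {0})"
    have oS: "open S" unfolding S_def by (rule continuous_open_preimage[OF Fc]) auto
    have yS: "y \<in> S" using y ne by (simp add: S_def F_def)
    have "AE x \<in> S in lebesgue. x \<in> {}" using ae by eventually_elim (auto simp: S_def)
    then have "y \<in> {}" by (rule mem_closed_if_AE_lebesgue_open[OF oS closed_empty _ yS])
    then show False by simp
  qed
  have m1: "w y = -1" if y: "y \<in> {0<..<1}" for y
  proof (rule ccontr)
    assume ne: "w y \<noteq> -1"
    with sq[OF y] have w1: "w y = 1" by (metis power2_eq_1_iff)
    obtain b where b: "0 < b" "\<And>t. 0 < t \<Longrightarrow> t < b \<Longrightarrow> \<bar>w t - -1\<bar> < 1"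
      using near0[OF J(2) zero_less_one] by blast
    define t where "t = min b (y) / 2"
    have t: "0 < t" "t < b" "t < y" using b y by (auto simp: t_def)
    have "w t < 0" using b(2)[OF t(1) t(2)] by auto
    moreover have "continuous_on {t..y} w" by (rule continuous_on_subset[OF J(1)]) (use t y in auto)
    ultimately obtain z where zz: "t \<le> z" "z \<le> y" "w z = 0"
      using IVT'[of w t 0 y] w1 t by auto
    have "z \<in> {0<..<1}" using zz t y by auto
    then show False using sq[of z] zz by simp
  qed
  have "((\<lambda>_. -1) \<longlongrightarrow> s) (at_left (1::real))"
    by (rule Lim_transform_eventually[OF J(3)]) (use ev_I01' in \<open>eventually_elim, simp add: m1\<close>)
  then show ?thesis by (simp add: tendsto_const_iff)
qed

lemma EB_bound:
  assumes p: "1 \<le> p" and w: "w \<in> Jprime p s" and B: "EB p w = ennreal b" and b: "0 \<le> b"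
  shows "(s + 1)\<^sup>2 \<le> b"
proof -
  note J = J_basic[OF w]
  define g where "g = d2 p w"
  have gL: "Lp p g" and gw: "weak_deriv (deriv w) g" using d2_spec[OF J(5)] by (auto simp: g_def)
  have gi: "integrable I01 g" by (rule Lp_integrable[OF p gL])
  have gm: "g \<in> borel_measurable I01" using gL by (simp add: Lp_def)
  have g2: "integrable I01 (\<lambda>x. (g x)\<^sup>2) \<and> (LINT x|I01. (g x)\<^sup>2) = b"
    using nn_integral_eq_integrable[of "\<lambda>x. (g x)\<^sup>2" I01 b] B b gm by (simp add: EB_def g_def)
  have mI: "measure I01 (space I01) = 1" using emeasure_I01 by (simp add: measure_def)
  have key: "\<bar>s + 1\<bar> \<le> (b / l + l) / 2" if l: "0 < l" for l
  proof -
    let ?M = "(b / l + l) / 2"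
    have S1: "\<bar>deriv w y - deriv w a\<bar> \<le> ?M" if a: "0 < a" "a < y" "y < 1" for a y
    proof -
      have "deriv w y - deriv w a = (LINT x|I01. indicator {a<..<y} x * g x)"
        by (rule weak_FT[OF J(8) gi gw a])
      also have "\<bar>\<dots>\<bar> \<le> (LINT x|I01. \<bar>indicator {a<..<y} x * g x\<bar>)" by (rule integral_abs_bound)
      also have "\<dots> \<le> (LINT x|I01. (1 / (2 * l)) * (g x)\<^sup>2 + l / 2)"
      proof (rule integral_mono)
        show "integrable I01 (\<lambda>x. \<bar>indicator {a<..<y} x * g x\<bar>)"
          using integrable_ind[OF gi, of "{a<..<y}"] by auto
        show "integrable I01 (\<lambda>x. 1 / (2 * l) * (g x)\<^sup>2 + l / 2)"
          apply (rule Bochner_Integration.integrable_add)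
           apply (rule integrable_mult_right)
          using g2 apply simp
          by (rule finite_measure.integrable_const[OF fin_I01])
        fix x
        have "0 \<le> (\<bar>g x\<bar> - l)\<^sup>2" by simp
        then have "2 * l * \<bar>g x\<bar> \<le> (g x)\<^sup>2 + l\<^sup>2" by (simp add: power2_eq_square algebra_simps)
        then have "\<bar>g x\<bar> \<le> 1 / (2 * l) * (g x)\<^sup>2 + l / 2"
          using l by (simp add: field_simps power2_eq_square)
        moreover have "\<bar>indicator {a<..<y} x * g x\<bar> \<le> \<bar>g x\<bar>" by (simp add: indicator_def)
        ultimately show "\<bar>indicator {a<..<y} x * g x\<bar> \<le> 1 / (2 * l) * (g x)\<^sup>2 + l / 2" by linarith
      qed
      also have "\<dots> = (1 / (2 * l)) * b + l / 2"
        using g2 finite_measure.integrable_const[OF fin_I01, of "l/2"] mI by simp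
      also have "\<dots> = ?M" by (simp add: field_simps)
      finally show ?thesis .
    qed
    have S2: "\<bar>deriv w y\<bar> \<le> ?M" if y: "0 < y" "y < 1" for y
    proof (rule tendsto_upperbound)
      have "((\<lambda>a. \<bar>deriv w y - deriv w a\<bar>) \<longlongrightarrow> \<bar>deriv w y - 0\<bar>) (at_right 0)"
        by (intro tendsto_intros J(6))
      then show "((\<lambda>a. \<bar>deriv w y - deriv w a\<bar>) \<longlongrightarrow> \<bar>deriv w y\<bar>) (at_right 0)" by simp
      show "eventually (\<lambda>a. ?M \<ge> \<bar>deriv w y - deriv w a\<bar>) (at_right 0)"
        unfolding eventually_at_right_field by (rule exI[of _ y]) (use y S1 in blast)
    qed simp_all
    have S3: "\<bar>w y2 - w y1\<bar> \<le> ?M" if y: "0 < y1" "y1 < y2" "y2 < 1" for y1 y2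
    proof -
      obtain z where z: "y1 < z" "z < y2" "w y2 - w y1 = (y2 - y1) * deriv w z"
        using MVT2[OF y(2), of w "deriv w"] J(7) y by force
      have "\<bar>w y2 - w y1\<bar> = (y2 - y1) * \<bar>deriv w z\<bar>" using z y by (simp add: abs_mult)
      also have "\<dots> \<le> 1 * ?M"
        using S2[of z] z y l b by (intro mult_mono) auto
      finally show ?thesis by simp
    qed
    have S4: "\<bar>w y2 - -1\<bar> \<le> ?M" if y: "0 < y2" "y2 < 1" for y2
    proof (rule tendsto_upperbound)
      show "((\<lambda>y1. \<bar>w y2 - w y1\<bar>) \<longlongrightarrow> \<bar>w y2 - -1\<bar>) (at_right 0)"
        by (intro tendsto_intros J(2))
      show "eventually (\<lambda>y1. ?M \<ge> \<bar>w y2 - w y1\<bar>) (at_right 0)"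
        unfolding eventually_at_right_field by (rule exI[of _ y2]) (use y S3 in blast)
    qed simp_all
    show ?thesis
    proof (rule tendsto_upperbound)
      have "((\<lambda>y2. \<bar>w y2 - -1\<bar>) \<longlongrightarrow> \<bar>s - -1\<bar>) (at_left 1)"
        by (intro tendsto_intros J(3))
      then show "((\<lambda>y2. \<bar>w y2 - -1\<bar>) \<longlongrightarrow> \<bar>s + 1\<bar>) (at_left 1)" by simp
      show "eventually (\<lambda>y2. ?M \<ge> \<bar>w y2 - -1\<bar>) (at_left 1)"
        unfolding eventually_at_left_field by (rule exI[of _ 0]) (use S4 in force)
    qed simp_all
  qed
  show ?thesis
  proof (cases "b = 0")
    case True
    have "s + 1 = 0"
    proof (rule ccontr)
      assume "s + 1 \<noteq> 0"
      then have pos: "0 < \<bar>s + 1\<bar>" by simp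
      from key[OF this] True have "\<bar>s + 1\<bar> \<le> \<bar>s + 1\<bar> / 2" by simp
      then show False using pos by (simp add: field_simps)
    qed
    then show ?thesis using b by simp
  next
    case False
    then have bp: "0 < b" using b by simp
    have "\<bar>s + 1\<bar> \<le> (b / sqrt b + sqrt b) / 2" using key[of "sqrt b"] bp by simp
    also have "(b / sqrt b + sqrt b) / 2 = sqrt b"
      using bp by (simp add: field_simps real_sqrt_mult[symmetric])
    finally have "\<bar>s + 1\<bar> \<le> sqrt b" .
    then have "\<bar>s + 1\<bar>\<^sup>2 \<le> (sqrt b)\<^sup>2" by (intro power_mono) auto
    then show ?thesis using b by simp
  qed
qed


definition bnd :: "real \<Rightarrow> real \<Rightarrow> real \<Rightarrow> nat \<Rightarrow> real \<Rightarrow> real \<Rightarrow> real \<Rightarrow> real" where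
  "bnd \<tau> \<mu> \<theta> k a b c =
    (3 * \<theta> * ((1 + \<tau>) * a + (1 + 1/\<tau>) * (4 * a / \<mu> + (4 * \<mu> + 2) * (c ^ 4 / real (Suc (4 * k))) + 8 * (c\<^sup>2 / real (Suc (2 * k)))))
     + ((1 + \<tau>) * b + (1 + 1/\<tau>) * ((c * real k * real (k - 1))\<^sup>2 / real (Suc (2 * k - 4)))) / \<theta> ^ 3) / 4"

lemma R_core:
  fixes \<tau> \<mu> \<theta> T a b \<Phi> X4 X2 Y c K3 :: real
  assumes \<tau>: "0 < \<tau>" and \<mu>: "0 < \<mu>" and \<theta>: "0 < \<theta>" and T: "T = 1 + 1/\<tau>"
    and P1: "\<theta> * a = \<Phi>" and P2: "b / \<theta> ^ 3 = \<Phi>" and P3: "\<theta> * X4 \<le> c ^ 4 / 4"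
    and P4: "\<theta> * X2 \<le> c\<^sup>2 / 2" and P5: "Y / \<theta> ^ 3 \<le> c\<^sup>2 * K3"
  shows "(3 * \<theta> * ((1 + \<tau>) * a + T * (4 * a / \<mu> + (4 * \<mu> + 2) * X4 + 8 * X2)) + ((1 + \<tau>) * b + T * Y) / \<theta> ^ 3) / 4
     \<le> (1 + \<tau>) * \<Phi> + T * (3 * \<Phi> / \<mu> + 3 / 8 * (2 * \<mu> + 1) * c ^ 4 + 3 * c\<^sup>2 + K3 * c\<^sup>2 / 4)"
proof -
  have Tp: "0 \<le> T" using \<tau> T by simp
  have e: "(3 * \<theta> * ((1 + \<tau>) * a + T * (4 * a / \<mu> + (4 * \<mu> + 2) * X4 + 8 * X2)) + ((1 + \<tau>) * b + T * Y) / \<theta> ^ 3) / 4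
     = (1 + \<tau>) * (\<theta> * a) * 3 / 4 + (1 + \<tau>) * (b / \<theta> ^ 3) / 4 + T * (3 * (\<theta> * a) / \<mu>)
       + T * (3 / 4 * (4 * \<mu> + 2)) * (\<theta> * X4) + (6 * T) * (\<theta> * X2) + (T / 4) * (Y / \<theta> ^ 3)"
    using \<theta> \<mu> by (simp add: field_simps)
  have i1: "T * (3 / 4 * (4 * \<mu> + 2)) * (\<theta> * X4) \<le> T * (3 / 4 * (4 * \<mu> + 2)) * (c ^ 4 / 4)"
    using P3 Tp \<mu> by (intro mult_left_mono) auto
  have i2: "(6 * T) * (\<theta> * X2) \<le> (6 * T) * (c\<^sup>2 / 2)"
    using P4 Tp by (intro mult_left_mono) auto
  have i3: "(T / 4) * (Y / \<theta> ^ 3) \<le> (T / 4) * (c\<^sup>2 * K3)"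
    using P5 Tp by (intro mult_left_mono) auto
  have f: "(1 + \<tau>) * \<Phi> * 3 / 4 + (1 + \<tau>) * \<Phi> / 4 + T * (3 * \<Phi> / \<mu>)
       + T * (3 / 4 * (4 * \<mu> + 2)) * (c ^ 4 / 4) + (6 * T) * (c\<^sup>2 / 2) + (T / 4) * (c\<^sup>2 * K3)
     = (1 + \<tau>) * \<Phi> + T * (3 * \<Phi> / \<mu> + 3 / 8 * (2 * \<mu> + 1) * c ^ 4 + 3 * c\<^sup>2 + K3 * c\<^sup>2 / 4)"
    by (simp add: field_simps)
  show ?thesis unfolding e P1 P2 using i1 i2 i3 f by linarith
qed

lemma powr_facts:
  fixes a b :: real
  assumes a: "0 < a" and b: "0 < b"
  defines "\<theta> \<equiv> (b / a) powr (1/4)"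
  shows "0 < \<theta>" "\<theta> * a = a powr (3/4) * b powr (1/4)" "b / \<theta> ^ 3 = a powr (3/4) * b powr (1/4)"
proof -
  show t: "0 < \<theta>" using a b by (simp add: \<theta>_def)
  have th: "\<theta> = b powr (1/4) / a powr (1/4)" using a b by (simp add: \<theta>_def powr_divide)
  have a1: "a = a powr (1/4) * a powr (3/4)" using a by (simp add: powr_add[symmetric])
  have b1: "b = b powr (1/4) * b powr (3/4)" using b by (simp add: powr_add[symmetric])
  have p3: "(x powr (1/4)) ^ 3 = x powr (3/4)" if "0 < x" for x :: real
  proof -
    have pos: "0 < x powr (1/4)" using that by simp
    have "(x powr (1/4)) ^ 3 = (x powr (1/4)) powr (real (3::nat))" by (rule powr_realpow[OF pos, symmetric])
    also have "\<dots> = x powr (1/4 * real (3::nat))" by (rule powr_powr)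
    also have "1/4 * real (3::nat) = 3/4" by simp
    finally show ?thesis .
  qed
  show "\<theta> * a = a powr (3/4) * b powr (1/4)"
    using a b by (subst a1) (simp add: th field_simps)
  have th3: "\<theta> ^ 3 = b powr (3/4) / a powr (3/4)" using a b by (simp add: th power_divide p3)
  have bb: "b / b powr (3/4) = b powr (1/4)"
  proof -
    have "b powr (1/4) = b powr (1 - 3/4)" by simp
    also have "\<dots> = b powr 1 / b powr (3/4)" by (rule powr_diff)
    finally show ?thesis using b by simp
  qed
  have "b / \<theta> ^ 3 = b * a powr (3/4) / b powr (3/4)" unfolding th3 by (simp add: divide_divide_eq_right)
  also have "\<dots> = (b / b powr (3/4)) * a powr (3/4)" by simp
  finally have "b / \<theta> ^ 3 = (b / b powr (3/4)) * a powr (3/4)" .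
  then show "b / \<theta> ^ 3 = a powr (3/4) * b powr (1/4)" using bb by simp
qed

lemma R:
  fixes M \<sigma> \<epsilon> :: real
  assumes M: "0 < M" and \<sigma>: "0 < \<sigma>" and \<epsilon>: "0 < \<epsilon>"
  shows "\<exists>\<tau>>0. \<exists>\<mu>>0. \<exists>\<delta>>0. \<forall>a b c. 0 < a \<longrightarrow> \<sigma> \<le> b \<longrightarrow> a powr (3/4) * b powr (1/4) \<le> M \<longrightarrow> \<bar>c\<bar> < \<delta> \<longrightarrow>
     bnd \<tau> \<mu> ((b / a) powr (1/4)) (nat \<lceil>(b / a) powr (1/4)\<rceil> + 2) a b c \<le> a powr (3/4) * b powr (1/4) + \<epsilon>"
proof -
  define \<theta>0 where "\<theta>0 = min 1 (\<sigma> / M)"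
  define K3 where "K3 = (1 + 3 / \<theta>0) ^ 3"
  define \<tau> where "\<tau> = \<epsilon> / (4 * M)"
  define T where "T = 1 + 1 / \<tau>"
  define \<mu> where "\<mu> = 12 * T * M / \<epsilon>"
  define Q where "Q = 3 / 4 * (\<mu> + 1) + 3 + K3 / 4"
  define \<delta> where "\<delta> = min 1 (sqrt (\<epsilon> / (2 * T * Q)))"
  have \<theta>0: "0 < \<theta>0" "\<theta>0 \<le> 1" "\<theta>0 \<le> \<sigma> / M" using M \<sigma> by (auto simp: \<theta>0_def)
  have \<tau>: "0 < \<tau>" using \<epsilon> M by (simp add: \<tau>_def)
  have T: "1 < T" using \<tau> by (simp add: T_def)
  have \<mu>: "0 < \<mu>" using T M \<epsilon> by (simp add: \<mu>_def)
  have K3: "0 \<le> K3" using \<theta>0 by (simp add: K3_def)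
  have Q: "0 < Q"
  proof -
    have "0 < 3 / 4 * (\<mu> + 1)" using \<mu> by simp
    then show ?thesis using K3 unfolding Q_def by linarith
  qed
  have \<delta>: "0 < \<delta>" using \<epsilon> T Q by (simp add: \<delta>_def)
  have main: "bnd \<tau> \<mu> ((b / a) powr (1/4)) (nat \<lceil>(b / a) powr (1/4)\<rceil> + 2) a b c \<le> a powr (3/4) * b powr (1/4) + \<epsilon>"
    if a: "0 < a" and b: "\<sigma> \<le> b" and PhiM: "a powr (3/4) * b powr (1/4) \<le> M" and c: "\<bar>c\<bar> < \<delta>" for a b c
  proof -
    define \<theta> where "\<theta> = (b / a) powr (1/4)"
    define \<Phi> where "\<Phi> = a powr (3/4) * b powr (1/4)"
    define k where "k = nat \<lceil>\<theta>\<rceil> + 2"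
    define kk where "kk = real k"
    have bp: "0 < b" using b \<sigma> by simp
    have t: "0 < \<theta>" "\<theta> * a = \<Phi>" "b / \<theta> ^ 3 = \<Phi>"
      using powr_facts[OF a bp] by (simp_all add: \<theta>_def \<Phi>_def)
    have Phi: "0 < \<Phi>" "\<Phi> \<le> M" using a bp PhiM by (simp_all add: \<Phi>_def)
    have t0: "\<theta>0 \<le> \<theta>"
    proof (cases "1 \<le> \<theta>")
      case True then show ?thesis using \<theta>0 by simp
    next
      case False
      have "\<sigma> / \<theta> ^ 3 \<le> b / \<theta> ^ 3" using b t(1) by (intro divide_right_mono) auto
      then have "\<sigma> / \<theta> ^ 3 \<le> \<Phi>" using t(3) by simp
      then have "\<sigma> \<le> \<Phi> * \<theta> ^ 3" using t by (simp add: field_simps)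
      also have "\<dots> \<le> M * \<theta> ^ 3" using Phi t by (intro mult_right_mono) auto
      finally have "\<sigma> / M \<le> \<theta> ^ 3" using M by (simp add: field_simps)
      also have "\<theta> ^ 3 \<le> \<theta> ^ 1" using False t by (intro power_decreasing) auto
      finally show ?thesis using \<theta>0 by simp
    qed
    have kk: "\<theta> \<le> kk" "kk \<le> \<theta> + 3" "2 \<le> kk" "2 \<le> k"
    proof -
      have e: "kk = of_int \<lceil>\<theta>\<rceil> + 2" using t by (simp add: kk_def k_def)
      have c: "of_int \<lceil>\<theta>\<rceil> - 1 < \<theta>" "\<theta> \<le> of_int \<lceil>\<theta>\<rceil>" using ceiling_correct[of \<theta>] by auto
      show "\<theta> \<le> kk" "kk \<le> \<theta> + 3" "2 \<le> kk" using e c t by linarith+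
      show "2 \<le> k" by (simp add: k_def)
    qed
    have rk: "real (Suc (4 * k)) = 4 * kk + 1" "real (Suc (2 * k)) = 2 * kk + 1"
      "real (k - 1) = kk - 1" "real (Suc (2 * k - 4)) = 2 * kk - 3"
      using kk(4) by (auto simp: kk_def of_nat_diff)
    have P3: "\<theta> * (c ^ 4 / real (Suc (4 * k))) \<le> c ^ 4 / 4"
    proof -
      have "\<theta> / (4 * kk + 1) \<le> 1 / 4" using kk t by (simp add: field_simps)
      then have "c ^ 4 * (\<theta> / (4 * kk + 1)) \<le> c ^ 4 * (1 / 4)"
        by (intro mult_left_mono) (auto simp: zero_le_even_power)
      then show ?thesis using rk by (simp add: field_simps)
    qed
    have P4: "\<theta> * (c\<^sup>2 / real (Suc (2 * k))) \<le> c\<^sup>2 / 2"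
    proof -
      have "\<theta> / (2 * kk + 1) \<le> 1 / 2" using kk t by (simp add: field_simps)
      then have "c\<^sup>2 * (\<theta> / (2 * kk + 1)) \<le> c\<^sup>2 * (1 / 2)"
        by (intro mult_left_mono) auto
      then show ?thesis using rk by (simp add: field_simps)
    qed
    have P5: "(c * real k * real (k - 1))\<^sup>2 / real (Suc (2 * k - 4)) / \<theta> ^ 3 \<le> c\<^sup>2 * K3"
    proof -
      have d: "0 < 2 * kk - 3" using kk by simp
      have "(kk * (kk - 1))\<^sup>2 \<le> kk ^ 3 * (2 * kk - 3)"
      proof -
        have "2 * 1 \<le> kk * (kk - 1)" using kk by (intro mult_mono) auto
        then have "0 \<le> kk ^ 2 * (kk * (kk - 1) - 1)" by (intro mult_nonneg_nonneg) auto
        then show ?thesis by (simp add: power2_eq_square power3_eq_cube algebra_simps)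
      qed
      then have y: "(kk * (kk - 1))\<^sup>2 / (2 * kk - 3) \<le> kk ^ 3" using d by (simp add: divide_le_eq)
      have "kk / \<theta> \<le> 1 + 3 / \<theta>0"
      proof -
        have "kk / \<theta> \<le> (\<theta> + 3) / \<theta>" using kk t by (simp add: divide_right_mono)
        also have "\<dots> = 1 + 3 / \<theta>" using t by (simp add: field_simps)
        also have "3 / \<theta> \<le> 3 / \<theta>0" using t t0 \<theta>0 by (simp add: frac_le)
        finally show ?thesis by simp
      qed
      then have "(kk / \<theta>) ^ 3 \<le> K3" unfolding K3_def using kk t by (intro power_mono) auto
      then have z: "kk ^ 3 / \<theta> ^ 3 \<le> K3" by (simp add: power_divide)
      have "(c * real k * real (k - 1))\<^sup>2 / real (Suc (2 * k - 4)) / \<theta> ^ 3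
          = c\<^sup>2 * ((kk * (kk - 1))\<^sup>2 / (2 * kk - 3) / \<theta> ^ 3)"
        using rk by (simp add: kk_def power_mult_distrib mult.assoc)
      also have "(kk * (kk - 1))\<^sup>2 / (2 * kk - 3) / \<theta> ^ 3 \<le> kk ^ 3 / \<theta> ^ 3"
        by (rule divide_right_mono[OF y]) (use t in simp)
      also have "\<dots> \<le> K3" by (rule z)
      finally show ?thesis by (simp add: mult_left_mono)
    qed
    have core: "bnd \<tau> \<mu> \<theta> k a b c \<le> (1 + \<tau>) * \<Phi> + T * (3 * \<Phi> / \<mu> + 3 / 8 * (2 * \<mu> + 1) * c ^ 4 + 3 * c\<^sup>2 + K3 * c\<^sup>2 / 4)"
      unfolding bnd_def T_def
      by (rule R_core[OF \<tau> \<mu> t(1) refl t(2) t(3) P3 P4 P5])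
    have c1: "c\<^sup>2 \<le> 1" "c ^ 4 \<le> c\<^sup>2"
    proof -
      have "\<bar>c\<bar> \<le> 1" using c by (simp add: \<delta>_def)
      then have "\<bar>c\<bar>\<^sup>2 \<le> 1" by (intro power_le_one) auto
      then show cc: "c\<^sup>2 \<le> 1" by simp
      have "c ^ 4 = c\<^sup>2 * c\<^sup>2" by (simp add: power4_eq_xxxx power2_eq_square)
      also have "\<dots> \<le> c\<^sup>2 * 1" using cc by (intro mult_left_mono) auto
      finally show "c ^ 4 \<le> c\<^sup>2" by simp
    qed
    have c2: "c\<^sup>2 \<le> \<epsilon> / (2 * T * Q)"
    proof -
      have "\<bar>c\<bar> \<le> sqrt (\<epsilon> / (2 * T * Q))" using c by (simp add: \<delta>_def)
      then have "\<bar>c\<bar>\<^sup>2 \<le> (sqrt (\<epsilon> / (2 * T * Q)))\<^sup>2" by (intro power_mono) auto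
      then show ?thesis using \<epsilon> T Q by simp
    qed
    have e1: "\<tau> * \<Phi> \<le> \<epsilon> / 4"
    proof -
      have "\<tau> * \<Phi> \<le> \<tau> * M" using Phi \<tau> by (intro mult_left_mono) auto
      also have "\<dots> = \<epsilon> / 4" using M by (simp add: \<tau>_def)
      finally show ?thesis .
    qed
    have e2: "T * (3 * \<Phi> / \<mu>) \<le> \<epsilon> / 4"
    proof -
      have "T * (3 * \<Phi> / \<mu>) \<le> T * (3 * M / \<mu>)" using Phi T \<mu> by (intro mult_left_mono divide_right_mono) auto
      also have "\<dots> = \<epsilon> / 4" using M T \<epsilon> by (simp add: \<mu>_def field_simps)
      finally show ?thesis .
    qed
    have e3: "T * (3 / 8 * (2 * \<mu> + 1) * c ^ 4 + 3 * c\<^sup>2 + K3 * c\<^sup>2 / 4) \<le> \<epsilon> / 2"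
    proof -
      have "3 / 8 * (2 * \<mu> + 1) * c ^ 4 \<le> 3 / 8 * (2 * \<mu> + 1) * c\<^sup>2"
        using c1 \<mu> by (intro mult_left_mono) auto
      moreover have "3 / 8 * (2 * \<mu> + 1) * c\<^sup>2 \<le> 3 / 4 * (\<mu> + 1) * c\<^sup>2"
        by (intro mult_right_mono) auto
      moreover have "3 / 4 * (\<mu> + 1) * c\<^sup>2 + 3 * c\<^sup>2 + K3 * c\<^sup>2 / 4 = Q * c\<^sup>2"
        by (simp add: Q_def algebra_simps)
      ultimately have "3 / 8 * (2 * \<mu> + 1) * c ^ 4 + 3 * c\<^sup>2 + K3 * c\<^sup>2 / 4 \<le> Q * c\<^sup>2"
        by linarith
      then have "T * (3 / 8 * (2 * \<mu> + 1) * c ^ 4 + 3 * c\<^sup>2 + K3 * c\<^sup>2 / 4) \<le> T * (Q * c\<^sup>2)"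
        using T by (intro mult_left_mono) auto
      also have "T * (Q * c\<^sup>2) \<le> T * (Q * (\<epsilon> / (2 * T * Q)))"
        using T Q c2 by (intro mult_left_mono) auto
      also have "\<dots> = \<epsilon> / 2" using T Q by (simp add: field_simps)
      finally show ?thesis .
    qed
    have "bnd \<tau> \<mu> \<theta> k a b c \<le> \<Phi> + \<epsilon>"
    proof -
      have d: "T * (3 * \<Phi> / \<mu> + 3 / 8 * (2 * \<mu> + 1) * c ^ 4 + 3 * c\<^sup>2 + K3 * c\<^sup>2 / 4)
        = T * (3 * \<Phi> / \<mu>) + T * (3 / 8 * (2 * \<mu> + 1) * c ^ 4 + 3 * c\<^sup>2 + K3 * c\<^sup>2 / 4)"
        by (simp add: distrib_left)
      have d2: "(1 + \<tau>) * \<Phi> = \<Phi> + \<tau> * \<Phi>" by (simp add: algebra_simps)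
      show ?thesis using core e1 e2 e3 d d2 by linarith
    qed
    then show ?thesis by (simp add: \<theta>_def \<Phi>_def k_def)
  qed
  show ?thesis using \<tau> \<mu> \<delta> main by blast
qed


definition Bt :: "real \<Rightarrow> real \<Rightarrow> ennreal" where
  "Bt p t = (INF w\<in>Jprime p t. Phi p w)"

lemma beta_Bt: "beta p t = ennreal (4 / 3 powr (3/4)) * Bt p t"
  by (simp add: beta_def Bt_def)

lemma Bt_le: "w \<in> Jprime p t \<Longrightarrow> Bt p t \<le> Phi p w"
  unfolding Bt_def by (rule INF_lower)

lemma EA_const: "EA (\<lambda>_. -1) = 0"
  by (simp add: EA_def)

lemma EB_const: assumes "1 \<le> p" shows "EB p (\<lambda>_. -1) = 0"
proof -
  have "EB p (\<lambda>_. -1) = (\<integral>\<^sup>+ y. 0 \<partial>I01)"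
    unfolding EB_def by (rule nn_integral_cong_AE) (use const_J(2)[OF assms] in \<open>eventually_elim, simp\<close>)
  then show ?thesis by simp
qed

definition G :: "real \<Rightarrow> real" where "G c = bnd 1 1 1 2 0 0 c"

lemma Bt_G: assumes p: "1 \<le> p" shows "Bt p t \<le> ennreal (G (t + 1))"
proof -
  have J: "(\<lambda>_. -1::real) \<in> Jprime p (-1)" by (rule const_J(1)[OF p])
  have A0: "EA (\<lambda>_. -1::real) = ennreal 0" using EA_const by simp
  have B0: "EB p (\<lambda>_. -1::real) = ennreal 0" using EB_const[OF p] by simp
  note K = KL[OF p J order_refl[of "2::nat"] A0 B0 order_refl order_refl zero_less_one zero_less_one zero_less_one,
      where c="t + 1"]
  have k1: "(\<lambda>y. -1 + (t + 1) * y ^ 2) \<in> Jprime p t"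
    using K(1) by simp
  have k2: "Phi p (\<lambda>y. -1 + (t + 1) * y ^ 2) \<le> ennreal (G (t + 1))"
    using K(2) by (simp add: G_def bnd_def)
  show ?thesis using Bt_le[OF k1] k2 by (rule order_trans)
qed

lemma G_cont: "isCont G 0" "G 0 = 0"
proof -
  show "isCont G 0" unfolding G_def[abs_def] bnd_def by (intro continuous_intros) auto
  show "G 0 = 0" by (simp add: G_def bnd_def)
qed

lemma Bt_fin: assumes "1 \<le> p" shows "Bt p t < \<infinity>"
  using Bt_G[OF assms, of t] by (simp add: le_less_trans)

lemma Bt_m1: assumes "1 \<le> p" shows "Bt p (-1) = 0"
  using Bt_G[OF assms, of "-1"] G_cont(2) by simp

lemma ennreal_less_add: "(x::ennreal) < \<infinity> \<Longrightarrow> 0 < e \<Longrightarrow> x < x + ennreal e"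
  by (cases x) (auto simp: ennreal_plus[symmetric] intro!: ennreal_lessI simp del: ennreal_plus)

lemma transfer:
  assumes p: "1 \<le> p" and \<sigma>: "0 < \<sigma>" and M: "0 < M" and \<epsilon>: "0 < \<epsilon>"
  shows "\<exists>\<delta>>0. \<forall>s c. \<sigma> \<le> (s + 1)\<^sup>2 \<longrightarrow> Bt p s < ennreal M \<longrightarrow> \<bar>c\<bar> < \<delta> \<longrightarrow> Bt p (s + c) \<le> Bt p s + ennreal \<epsilon>"
proof -
  have e2: "0 < \<epsilon> / 2" using \<epsilon> by simp
  obtain \<tau> \<mu> \<delta> where \<tau>: "0 < \<tau>" and \<mu>: "0 < \<mu>" and \<delta>: "0 < \<delta>"
    and R': "\<And>a b c. 0 < a \<Longrightarrow> \<sigma> \<le> b \<Longrightarrow> a powr (3/4) * b powr (1/4) \<le> M \<Longrightarrow> \<bar>c\<bar> < \<delta> \<Longrightarrow>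
       bnd \<tau> \<mu> ((b / a) powr (1/4)) (nat \<lceil>(b / a) powr (1/4)\<rceil> + 2) a b c \<le> a powr (3/4) * b powr (1/4) + \<epsilon> / 2"
    using R[OF M \<sigma> e2] by blast
  have "Bt p (s + c) \<le> Bt p s + ennreal \<epsilon>"
    if s: "\<sigma> \<le> (s + 1)\<^sup>2" and BM: "Bt p s < ennreal M" and c: "\<bar>c\<bar> < \<delta>" for s c
  proof -
    have "Bt p s < min (Bt p s + ennreal (\<epsilon> / 2)) (ennreal M)"
      using ennreal_less_add[OF Bt_fin[OF p] e2] BM by simp
    then have "\<exists>w\<in>Jprime p s. Phi p w < min (Bt p s + ennreal (\<epsilon> / 2)) (ennreal M)"
      unfolding Bt_def[of p s] by (simp only: INF_less_iff)
    then obtain w where w: "w \<in> Jprime p s" and wlt: "Phi p w < min (Bt p s + ennreal (\<epsilon> / 2)) (ennreal M)"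
      by blast
    obtain a where a: "EA w = ennreal a" "0 \<le> a"
      using EA_fin[OF w] by (cases "EA w") auto
    have sm1: "s \<noteq> -1" using s \<sigma> by auto
    have ap: "0 < a"
    proof (rule ccontr)
      assume "\<not> 0 < a"
      then have "EA w = 0" using a by simp
      then show False using EA_zero[OF w] sm1 by simp
    qed
    have EBfin: "EB p w \<noteq> \<infinity>"
    proof
      assume "EB p w = \<infinity>"
      then have "Phi p w = ennreal (a powr (3/4)) * \<infinity>"
        using a by (simp add: Phi_EA_EB epow_ennreal epow_def)
      also have "\<dots> = \<infinity>" using ap by simp
      finally show False using wlt by simp
    qed
    obtain b where b: "EB p w = ennreal b" "0 \<le> b"
      using EBfin by (cases "EB p w") auto
    have sb: "\<sigma> \<le> b" using s EB_bound[OF p w b] by simp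
    define \<Phi> where "\<Phi> = a powr (3/4) * b powr (1/4)"
    have Phiw: "Phi p w = ennreal \<Phi>" using Phi_fin[OF a(1) b(1) a(2) b(2)] by (simp add: \<Phi>_def)
    have PhiM: "\<Phi> \<le> M"
    proof -
      have "ennreal \<Phi> < ennreal M" using wlt Phiw by simp
      moreover have "0 \<le> \<Phi>" by (simp add: \<Phi>_def)
      ultimately show ?thesis by (simp add: ennreal_less_iff)
    qed
    define \<theta> where "\<theta> = (b / a) powr (1/4)"
    define k where "k = nat \<lceil>\<theta>\<rceil> + 2"
    have \<theta>: "0 < \<theta>" using ap sb \<sigma> by (simp add: \<theta>_def)
    have k: "2 \<le> k" by (simp add: k_def)
    have bd: "bnd \<tau> \<mu> \<theta> k a b c \<le> \<Phi> + \<epsilon> / 2"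
      using R'[OF ap sb _ c] PhiM by (simp add: \<Phi>_def \<theta>_def k_def)
    note K = KL[OF p w k a(1) b(1) a(2) b(2) \<tau> \<mu> \<theta>, of c]
    have "Bt p (s + c) \<le> Phi p (\<lambda>y. w y + c * y ^ k)" by (rule Bt_le[OF K(1)])
    also have "\<dots> \<le> ennreal (bnd \<tau> \<mu> \<theta> k a b c)" using K(2) by (simp add: bnd_def)
    also have "\<dots> \<le> ennreal (\<Phi> + \<epsilon> / 2)" using bd by (rule ennreal_leI)
    also have "\<dots> = Phi p w + ennreal (\<epsilon> / 2)"
      using Phiw a b \<epsilon> by (simp add: \<Phi>_def ennreal_plus)
    also have "\<dots> \<le> (Bt p s + ennreal (\<epsilon> / 2)) + ennreal (\<epsilon> / 2)"
      using wlt by (intro add_right_mono) (simp add: less_imp_le)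
    also have "\<dots> = Bt p s + ennreal \<epsilon>"
      using \<epsilon> by (simp add: add.assoc ennreal_plus[symmetric] del: ennreal_plus)
    finally show ?thesis .
  qed
  then show ?thesis using \<delta> by blast
qed

lemma Bt_real: "1 \<le> p \<Longrightarrow> Bt p t = ennreal (enn2real (Bt p t))"
  using Bt_fin[of p t] by simp

lemma cont_Bt:
  assumes p: "1 \<le> p"
  shows "continuous_on UNIV (\<lambda>t. enn2real (Bt p t))"
proof -
  define f where "f t = enn2real (Bt p t)" for t
  have fnn: "0 \<le> f t" for t by (simp add: f_def)
  have fe: "Bt p t = ennreal (f t)" for t unfolding f_def by (rule Bt_real[OF p])
  have "isCont f t0" for t0
    unfolding isCont_def LIM_eq
  proof (intro allI impI)
    fix r :: real assume r: "0 < r"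
    show "\<exists>s>0. \<forall>x. x \<noteq> t0 \<and> norm (x - t0) < s \<longrightarrow> norm (f x - f t0) < r"
    proof (cases "t0 = -1")
      case True
      have "G \<midarrow>0\<rightarrow> G 0" using G_cont(1) by (simp add: isCont_def)
      then obtain s where s: "s > 0" "\<And>x. x \<noteq> 0 \<and> norm (x - 0) < s \<Longrightarrow> norm (G x - G 0) < r"
        using r unfolding LIM_eq by blast
      have "norm (f x - f t0) < r" if x: "x \<noteq> t0 \<and> norm (x - t0) < s" for x
      proof -
        have f0: "f t0 = 0" using Bt_m1[OF p] True by (simp add: f_def)
        have "ennreal (f x) \<le> ennreal (G (x + 1))" using Bt_G[OF p, of x] fe by simp
        moreover have "\<bar>G (x + 1)\<bar> < r" using s(2)[of "x + 1"] x True G_cont(2) by auto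
        ultimately have "f x < r" using fnn
          by (cases "0 \<le> G (x + 1)") (auto simp: ennreal_le_iff2 ennreal_neg)
        then show ?thesis using f0 fnn by simp
      qed
      then show ?thesis using s(1) by blast
    next
      case False
      define \<sigma> where "\<sigma> = (t0 + 1)\<^sup>2 / 4"
      define M where "M = f t0 + 2"
      define e where "e = min 1 (r / 2)"
      have \<sigma>: "0 < \<sigma>" using False by (simp add: \<sigma>_def)
      have M: "0 < M" using fnn[of t0] by (simp add: M_def)
      have e: "0 < e" "e \<le> 1" "e < r" using r by (auto simp: e_def)
      obtain \<delta> where \<delta>: "0 < \<delta>" and T: "\<And>s c. \<sigma> \<le> (s + 1)\<^sup>2 \<Longrightarrow> Bt p s < ennreal M \<Longrightarrow> \<bar>c\<bar> < \<delta> \<Longrightarrow>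
          Bt p (s + c) \<le> Bt p s + ennreal e"
        using transfer[OF p \<sigma> M e(1)] by blast
      define d where "d = min \<delta> (\<bar>t0 + 1\<bar> / 2)"
      have d: "0 < d" using \<delta> False by (simp add: d_def)
      have "norm (f x - f t0) < r" if x: "x \<noteq> t0 \<and> norm (x - t0) < d" for x
      proof -
        have xd: "\<bar>x - t0\<bar> < \<delta>" "\<bar>x - t0\<bar> < \<bar>t0 + 1\<bar> / 2" using x by (auto simp: d_def)
        have s0: "\<sigma> \<le> (t0 + 1)\<^sup>2" using \<sigma>_def by (simp add: \<sigma>_def)
        have B0: "Bt p t0 < ennreal M" using fe[of t0] fnn[of t0] by (simp add: M_def ennreal_less_iff)
        have up: "Bt p (t0 + (x - t0)) \<le> Bt p t0 + ennreal e"
          by (rule T[OF s0 B0]) (use xd in simp)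
        then have up': "f x \<le> f t0 + e"
          using fe[of x] fe[of t0] fnn e by (simp add: ennreal_plus[symmetric] del: ennreal_plus)
        have sx: "\<sigma> \<le> (x + 1)\<^sup>2"
        proof -
          have "\<bar>t0 + 1\<bar> \<le> \<bar>x + 1\<bar> + \<bar>t0 - x\<bar>"
            using abs_triangle_ineq[of "x + 1" "t0 - x"] by simp
          then have "\<bar>t0 + 1\<bar> / 2 \<le> \<bar>x + 1\<bar>" using xd(2) by (simp add: abs_minus_commute)
          then have "(\<bar>t0 + 1\<bar> / 2)\<^sup>2 \<le> \<bar>x + 1\<bar>\<^sup>2" by (intro power_mono) auto
          then show ?thesis by (simp add: \<sigma>_def power_divide)
        qed
        have "f x < M" using up' e by (simp add: M_def)
        then have Bx: "Bt p x < ennreal M"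
          unfolding fe[of x] using M by (intro ennreal_lessI)
        have low: "Bt p (x + (t0 - x)) \<le> Bt p x + ennreal e"
          by (rule T[OF sx Bx]) (use xd in simp)
        then have low': "f t0 \<le> f x + e"
          using fe[of x] fe[of t0] fnn e by (simp add: ennreal_plus[symmetric] del: ennreal_plus)
        show ?thesis using up' low' e by simp
      qed
      then show ?thesis using d by blast
    qed
  qed
  then show ?thesis unfolding f_def[abs_def] by (simp add: continuous_at_imp_continuous_on)
qed

theorem lemma4p4:
  fixes p :: real
  assumes "1 \<le> p" and "p \<le> 4"
  shows "(\<forall>t. beta p t < \<infinity>) \<and> continuous_on UNIV (\<lambda>t. enn2real (beta p t))"
proof
  show "\<forall>t. beta p t < \<infinity>"
    using Bt_fin[OF assms(1)] by (simp add: beta_Bt ennreal_mult_less_top)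
  have eq: "enn2real (beta p t) = (4 / 3 powr (3/4)) * enn2real (Bt p t)" for t
    by (simp add: beta_Bt enn2real_mult)
  show "continuous_on UNIV (\<lambda>t. enn2real (beta p t))"
    unfolding eq by (intro continuous_intros cont_Bt[OF assms(1)])
qed


end
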